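(* Let $u\in R^{\times}$, $a\in R$. Then \[\mathcal{P}_a=(XG-qGX)^N-(1-q)^NG^NX^N+(1-q)^NaE^NG^N\] is a polynomial $H_N^q$-identity for $\mathcal{B}_{(u,a)}$.
   Context: $R$ is a commutative unital ring, $N\ge2$, and $q\in R$ a root of the $N$-th cyclotomic polynomial over $\mathbb{Z}$. $H_N^q$ is the Taft Hopf algebra over $R$: generated by $g,x$ with $g^N=1$, $x^N=0$, $xg=qgx$, $\Delta(g)=g\otimes g$, $\Delta(x)=1\otimes x+x\otimes g$, $\varepsilon(g)=1$, $\varepsilon(x)=0$, free over $R$ with basis $\{g^mx^n:0\le m,n<N\}$. $\mathcal{B}_{(u,a)}$ is the $R$-algebra generated by $v_g,v_x$ with $v_g^N=u$, $v_x^N=a$, $v_xv_g=qv_gv_x$, a right $H_N^q$-comodule algebra via $v_g\mapsto v_g\otimes g$, $v_x\mapsto1\otimes x+v_x\otimes g$. Let $Z_i^H$ ($i\ge1$) be copies $\{Z_i^h:h\in H_N^q\}$ of the $R$-module $H_N^q$, $T=T(\bigoplus_iZ_i^H)$ the tensor algebra with coaction $\delta(Z_i^h)=\sum Z_i^{h_1}\otimes h_2$, and $E=Z_1^1$, $G=Z_1^g$, $X=Z_1^x$. An element $P\in T$ is a polynomial $H_N^q$-identity for a right $H_N^q$-comodule algebra $B$ if $f(P)=0$ for every right $H_N^q$-comodule algebra map $f:T\to B$. *)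

theory Defs
  imports Complex_Main "HOL-Computational_Algebra.Polynomial"
begin

definition cyclotomic_poly :: "nat \<Rightarrow> int poly" where
  "cyclotomic_poly N = (THE p. map_poly of_int p =
     (\<Prod>k\<in>{k. k < N \<and> coprime k N}. [:- cis (2 * pi * real k / real N), 1:]))"

text \<open>An element of the Taft algebra H, of B, is a coefficient function on the grid:
  h = sum of h(m,n) g^m x^n, resp. b = sum of b(m,n) v_g^m v_x^n.  Values off the grid
  are ignored (all equalities are tested on the grid only).\<close>

definition grid :: "nat \<Rightarrow> (nat \<times> nat) set" where
  "grid N = {..<N} \<times> {..<N}"

definition hbasis :: "nat \<times> nat \<Rightarrow> nat \<times> nat \<Rightarrow> 'r::comm_ring_1" where
  "hbasis k = (\<lambda>p. if p = k then 1 else 0)"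

text \<open>Multiplication in the Taft algebra: (g^a x^b)(g^c x^d) = q^(bc) g^(a+c mod N) x^(b+d),
  which vanishes when b+d >= N.\<close>
definition hmul :: "nat \<Rightarrow> 'r::comm_ring_1 \<Rightarrow> (nat \<times> nat \<Rightarrow> 'r) \<Rightarrow> (nat \<times> nat \<Rightarrow> 'r) \<Rightarrow> nat \<times> nat \<Rightarrow> 'r" where
  "hmul N q h k = (\<lambda>p. \<Sum>i\<in>grid N. \<Sum>j\<in>grid N.
     if ((fst i + fst j) mod N, snd i + snd j) = p then q ^ (snd i * fst j) * h i * k j else 0)"

text \<open>Multiplication in B_(u,a): (v_g^a v_x^b)(v_g^c v_x^d) = q^(bc) v_g^(a+c) v_x^(b+d),
  reduced by v_g^N = u and v_x^N = a.\<close>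
definition bmul :: "nat \<Rightarrow> 'r::comm_ring_1 \<Rightarrow> 'r \<Rightarrow> 'r \<Rightarrow> (nat \<times> nat \<Rightarrow> 'r) \<Rightarrow> (nat \<times> nat \<Rightarrow> 'r) \<Rightarrow> nat \<times> nat \<Rightarrow> 'r" where
  "bmul N q u a b c = (\<lambda>p. \<Sum>i\<in>grid N. \<Sum>j\<in>grid N.
     if ((fst i + fst j) mod N, (snd i + snd j) mod N) = p
     then q ^ (snd i * fst j) * u ^ ((fst i + fst j) div N) * a ^ ((snd i + snd j) div N) * b i * c j
     else 0)"

text \<open>Since H is free with basis g^m x^n, an element of M \<otimes> H is written uniquely as
  sum over l of F(l) \<otimes> (basis element l); we represent it by F :: grid \<Rightarrow> M.
  For an algebra M (whose elements are 'r-valued functions, multiplication mul),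
  the product in M \<otimes> H is (m \<otimes> h)(m' \<otimes> h') = m m' \<otimes> h h'.\<close>

definition tens_mul :: "nat \<Rightarrow> 'r::comm_ring_1 \<Rightarrow> (('y \<Rightarrow> 'r) \<Rightarrow> ('y \<Rightarrow> 'r) \<Rightarrow> ('y \<Rightarrow> 'r))
    \<Rightarrow> (nat \<times> nat \<Rightarrow> 'y \<Rightarrow> 'r) \<Rightarrow> (nat \<times> nat \<Rightarrow> 'y \<Rightarrow> 'r) \<Rightarrow> nat \<times> nat \<Rightarrow> 'y \<Rightarrow> 'r" where
  "tens_mul N q mul F G = (\<lambda>p y. \<Sum>k\<in>grid N. \<Sum>l\<in>grid N.
     if ((fst k + fst l) mod N, snd k + snd l) = p then q ^ (snd k * fst l) * mul (F k) (G l) y else 0)"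

definition tens_one :: "('y \<Rightarrow> 'r::comm_ring_1) \<Rightarrow> nat \<times> nat \<Rightarrow> 'y \<Rightarrow> 'r" where
  "tens_one one = (\<lambda>p. if p = (0, 0) then one else (\<lambda>_. 0))"

definition tens_pow :: "nat \<Rightarrow> 'r::comm_ring_1 \<Rightarrow> (('y \<Rightarrow> 'r) \<Rightarrow> ('y \<Rightarrow> 'r) \<Rightarrow> ('y \<Rightarrow> 'r))
    \<Rightarrow> ('y \<Rightarrow> 'r) \<Rightarrow> (nat \<times> nat \<Rightarrow> 'y \<Rightarrow> 'r) \<Rightarrow> nat \<Rightarrow> nat \<times> nat \<Rightarrow> 'y \<Rightarrow> 'r" where
  "tens_pow N q mul one F n = (tens_mul N q mul F ^^ n) (tens_one one)"

text \<open>g \<otimes> g (resp. v_g \<otimes> g), and 1 \<otimes> x + x \<otimes> g (resp. 1 \<otimes> x + v_x \<otimes> g).\<close>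
definition gen_g :: "nat \<times> nat \<Rightarrow> nat \<times> nat \<Rightarrow> 'r::comm_ring_1" where
  "gen_g = (\<lambda>p. if p = (1, 0) then hbasis (1, 0) else (\<lambda>_. 0))"

definition gen_x :: "nat \<times> nat \<Rightarrow> nat \<times> nat \<Rightarrow> 'r::comm_ring_1" where
  "gen_x = (\<lambda>p. if p = (0, 1) then hbasis (0, 0)
               else if p = (1, 0) then hbasis (0, 1) else (\<lambda>_. 0))"

definition comult :: "nat \<Rightarrow> 'r::comm_ring_1 \<Rightarrow> nat \<times> nat \<Rightarrow> nat \<times> nat \<Rightarrow> nat \<times> nat \<Rightarrow> 'r" where
  "comult N q k = tens_mul N q (hmul N q)
      (tens_pow N q (hmul N q) (hbasis (0, 0)) gen_g (fst k))
      (tens_pow N q (hmul N q) (hbasis (0, 0)) gen_x (snd k))"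

definition bcoact_basis :: "nat \<Rightarrow> 'r::comm_ring_1 \<Rightarrow> 'r \<Rightarrow> 'r \<Rightarrow> nat \<times> nat \<Rightarrow> nat \<times> nat \<Rightarrow> nat \<times> nat \<Rightarrow> 'r" where
  "bcoact_basis N q u a k = tens_mul N q (bmul N q u a)
      (tens_pow N q (bmul N q u a) (hbasis (0, 0)) gen_g (fst k))
      (tens_pow N q (bmul N q u a) (hbasis (0, 0)) gen_x (snd k))"

definition bcoact :: "nat \<Rightarrow> 'r::comm_ring_1 \<Rightarrow> 'r \<Rightarrow> 'r \<Rightarrow> (nat \<times> nat \<Rightarrow> 'r) \<Rightarrow> nat \<times> nat \<Rightarrow> nat \<times> nat \<Rightarrow> 'r" where
  "bcoact N q u a b = (\<lambda>l z. \<Sum>k\<in>grid N. b k * bcoact_basis N q u a k l z)"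

text \<open>T = T(\<Oplus>_{i>=1} Z_i^H) is the free associative R-algebra on the basis letters
  Z_i^{g^m x^n}, represented by the letter (i,(m,n)).\<close>

type_synonym letter = "nat \<times> (nat \<times> nat)"

definition Tcar :: "nat \<Rightarrow> (letter list \<Rightarrow> 'r::comm_ring_1) set" where
  "Tcar N = {p. finite {w. p w \<noteq> 0} \<and>
     (\<forall>w. p w \<noteq> 0 \<longrightarrow> (\<forall>c\<in>set w. 1 \<le> fst c \<and> snd c \<in> grid N))}"

definition tmul :: "(letter list \<Rightarrow> 'r::comm_ring_1) \<Rightarrow> (letter list \<Rightarrow> 'r) \<Rightarrow> letter list \<Rightarrow> 'r" where
  "tmul p r = (\<lambda>w. \<Sum>i\<le>length w. p (take i w) * r (drop i w))"

definition tone :: "letter list \<Rightarrow> 'r::comm_ring_1" where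
  "tone = (\<lambda>w. if w = [] then 1 else 0)"

definition tletter :: "letter \<Rightarrow> letter list \<Rightarrow> 'r::comm_ring_1" where
  "tletter c = (\<lambda>w. if w = [c] then 1 else 0)"

definition tpow :: "(letter list \<Rightarrow> 'r::comm_ring_1) \<Rightarrow> nat \<Rightarrow> letter list \<Rightarrow> 'r" where
  "tpow p n = (tmul p ^^ n) tone"

text \<open>Coaction of T: Z_i^h \<mapsto> sum Z_i^{h_1} \<otimes> h_2, extended as algebra map T \<rightarrow> T \<otimes> H.\<close>
definition letter_coact :: "nat \<Rightarrow> 'r::comm_ring_1 \<Rightarrow> letter \<Rightarrow> nat \<times> nat \<Rightarrow> letter list \<Rightarrow> 'r" where
  "letter_coact N q c = (\<lambda>l w. \<Sum>j\<in>grid N. comult N q (snd c) l j * tletter (fst c, j) w)"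

definition word_coact :: "nat \<Rightarrow> 'r::comm_ring_1 \<Rightarrow> letter list \<Rightarrow> nat \<times> nat \<Rightarrow> letter list \<Rightarrow> 'r" where
  "word_coact N q w = foldr (\<lambda>c acc. tens_mul N q tmul (letter_coact N q c) acc) w (tens_one tone)"

definition Tcoact :: "nat \<Rightarrow> 'r::comm_ring_1 \<Rightarrow> (letter list \<Rightarrow> 'r) \<Rightarrow> nat \<times> nat \<Rightarrow> letter list \<Rightarrow> 'r" where
  "Tcoact N q p = (\<lambda>l w'. \<Sum>w\<in>{w. p w \<noteq> 0}. p w * word_coact N q w l w')"

text \<open>Equalities in B are tested coefficientwise on the grid.\<close>
definition comod_alg_map :: "nat \<Rightarrow> 'r::comm_ring_1 \<Rightarrow> 'r \<Rightarrow> 'r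
     \<Rightarrow> ((letter list \<Rightarrow> 'r) \<Rightarrow> nat \<times> nat \<Rightarrow> 'r) \<Rightarrow> bool" where
  "comod_alg_map N q u a f \<longleftrightarrow>
     (\<forall>p\<in>Tcar N. \<forall>r\<in>Tcar N. \<forall>z\<in>grid N. f (\<lambda>w. p w + r w) z = f p z + f r z) \<and>
     (\<forall>c. \<forall>p\<in>Tcar N. \<forall>z\<in>grid N. f (\<lambda>w. c * p w) z = c * f p z) \<and>
     (\<forall>p\<in>Tcar N. \<forall>r\<in>Tcar N. \<forall>z\<in>grid N. f (tmul p r) z = bmul N q u a (f p) (f r) z) \<and>
     (\<forall>z\<in>grid N. f tone z = hbasis (0, 0) z) \<and>
     (\<forall>p\<in>Tcar N. \<forall>l\<in>grid N. \<forall>z\<in>grid N. bcoact N q u a (f p) l z = f (Tcoact N q p l) z)"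

definition poly_H_identity :: "nat \<Rightarrow> 'r::comm_ring_1 \<Rightarrow> 'r \<Rightarrow> 'r \<Rightarrow> (letter list \<Rightarrow> 'r) \<Rightarrow> bool" where
  "poly_H_identity N q u a P \<longleftrightarrow>
     (\<forall>f. comod_alg_map N q u a f \<longrightarrow> (\<forall>z\<in>grid N. f P z = 0))"

text \<open>E = Z_1^1, G = Z_1^g, X = Z_1^x and the element P_a.\<close>
definition Pa :: "nat \<Rightarrow> 'r::comm_ring_1 \<Rightarrow> 'r \<Rightarrow> letter list \<Rightarrow> 'r" where
  "Pa N q a = (let E = tletter (1, (0, 0)); G = tletter (1, (1, 0)); X = tletter (1, (0, 1));
                  C = (\<lambda>w. tmul X G w - q * tmul G X w)
     in (\<lambda>w. tpow C N w - (1 - q) ^ N * tmul (tpow G N) (tpow X N) w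
              + (1 - q) ^ N * a * tmul (tpow E N) (tpow G N) w))"

end

theory Submission
  imports Defs
begin


lemma map_int_mult: "map_poly (of_int :: int \<Rightarrow> 'a::comm_ring_1) (p * q) = map_poly of_int p * map_poly of_int q"
  by (simp add: poly_eq_iff coeff_map_poly coeff_mult of_int_sum)

lemma map_int_add: "map_poly (of_int :: int \<Rightarrow> 'a::comm_ring_1) (p + q) = map_poly of_int p + map_poly of_int q"
  by (simp add: poly_eq_iff coeff_map_poly)

lemma map_int_diff: "map_poly (of_int :: int \<Rightarrow> 'a::comm_ring_1) (p - q) = map_poly of_int p - map_poly of_int q"
  by (simp add: poly_eq_iff coeff_map_poly)

lemma map_int_power: "map_poly (of_int :: int \<Rightarrow> 'a::comm_ring_1) (p ^ n) = map_poly of_int p ^ n"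
  by (induction n) (simp_all add: map_int_mult)

lemma map_int_prod: "map_poly (of_int :: int \<Rightarrow> 'a::comm_ring_1) (prod f S) = (\<Prod>x\<in>S. map_poly of_int (f x))"
  by (induction S rule: infinite_finite_induct) (simp_all add: map_int_mult)

lemma map_int_monom: "map_poly (of_int :: int \<Rightarrow> 'a::comm_ring_1) (monom c n) = monom (of_int c) n"
  by (simp add: map_poly_monom)

lemma map_int_X: "map_poly (of_int :: int \<Rightarrow> 'a::comm_ring_1) [:0,1:] = [:0,1:]"
  by (simp add: poly_eq_iff coeff_map_poly coeff_pCons split: nat.split)

lemma map_int_inj: "map_poly (of_int :: int \<Rightarrow> complex) p = map_poly of_int q \<Longrightarrow> p = q"
  by (simp add: poly_eq_iff coeff_map_poly)

lemma map_int_degree: "degree (map_poly (of_int :: int \<Rightarrow> complex) p) = degree p"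
  by (rule degree_map_poly) simp

lemma map_int_lead: "lead_coeff (map_poly (of_int :: int \<Rightarrow> complex) p) = of_int (lead_coeff p)"
  by (simp add: map_int_degree coeff_map_poly)

lemma prod_lin_dvd:
  fixes p :: "complex poly"
  assumes "finite S" "inj_on r S" "\<forall>s\<in>S. poly p (r s) = 0"
  shows "(\<Prod>s\<in>S. [:- r s, 1:]) dvd p"
  using assms
proof (induction S rule: finite_induct)
  case empty then show ?case by simp
next
  case (insert b S)
  then have "(\<Prod>s\<in>S. [:- r s, 1:]) dvd p" by (auto intro: inj_on_subset)
  then obtain h where h: "p = (\<Prod>s\<in>S. [:- r s, 1:]) * h" by (elim dvdE)
  have nz: "poly (\<Prod>s\<in>S. [:- r s, 1:]) (r b) \<noteq> 0"
  proof -
    have "\<forall>s\<in>S. r b \<noteq> r s" using insert.prems(1) insert.hyps(2) by (auto simp: inj_on_def)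
    then show ?thesis by (simp add: poly_prod insert.hyps(1))
  qed
  have "poly p (r b) = 0" using insert.prems by simp
  then have "poly h (r b) = 0" using nz by (simp add: h)
  then have "[:- r b, 1:] dvd h" by (simp add: poly_eq_0_iff_dvd)
  then obtain k where "h = [:- r b, 1:] * k" by (elim dvdE)
  then have "p = ([:- r b, 1:] * (\<Prod>s\<in>S. [:- r s, 1:])) * k"
    using h by (simp only: mult_ac)
  then show ?case unfolding prod.insert[OF insert.hyps] by (rule dvdI)
qed

lemma int_div_monic:
  fixes A Q :: "int poly" and S :: "complex poly"
  assumes mon: "lead_coeff Q = 1" and eq: "map_poly of_int A = map_poly of_int Q * S"
  shows "\<exists>h. S = map_poly of_int h \<and> A = Q * h"
proof -
  have Q0: "Q \<noteq> 0" using mon by auto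
  obtain h r where hr: "pseudo_divmod A Q = (h, r)" by (cases "pseudo_divmod A Q")
  have 1: "A = Q * h + r" using pseudo_divmod(1)[OF Q0 hr] mon by simp
  have 2: "r = 0 \<or> degree r < degree Q" using pseudo_divmod(2)[OF Q0 hr] .
  have mQ0: "map_poly (of_int :: int \<Rightarrow> complex) Q \<noteq> 0"
    using Q0 map_int_inj[of Q 0] by auto
  have 3: "map_poly of_int Q * (S - map_poly of_int h) = (map_poly of_int r :: complex poly)"
    using eq 1 by (simp add: map_int_add map_int_mult algebra_simps)
  have "S = map_poly of_int h"
  proof (rule ccontr)
    assume "S \<noteq> map_poly of_int h"
    then have "degree (map_poly of_int Q * (S - map_poly of_int h)) \<ge> degree (map_poly (of_int :: int \<Rightarrow> complex) Q)"
      using mQ0 by (simp add: degree_mult_eq)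
    moreover have "map_poly of_int Q * (S - map_poly of_int h) \<noteq> 0"
      using mQ0 \<open>S \<noteq> _\<close> by simp
    ultimately show False using 2 3 by (auto simp: map_int_degree)
  qed
  moreover then have "map_poly (of_int :: int \<Rightarrow> complex) r = 0" using 3 by simp
  then have "r = 0" using map_int_inj[of r 0] by simp
  ultimately show ?thesis using 1 by auto
qed

definition PC :: "nat \<Rightarrow> complex poly" where
  "PC n = (\<Prod>k\<in>{k. k < n \<and> coprime k n}. [:- cis (2 * pi * real k / real n), 1:])"

lemma monic_lin_prod: "lead_coeff (\<Prod>s\<in>S. [:- (r s :: complex), 1:]) = 1"
  by (simp add: lead_coeff_prod)

lemma monic_dvd_eq:
  fixes p q :: "complex poly"
  assumes "lead_coeff p = 1" "lead_coeff q = 1" "degree p = degree q" "p dvd q"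
  shows "p = q"
proof -
  obtain h where h: "q = p * h" using assms(4) by (elim dvdE)
  have "q \<noteq> 0" "p \<noteq> 0" using assms by auto
  then have "h \<noteq> 0" using h by auto
  then have "degree h = 0" using h assms(3) \<open>p \<noteq> 0\<close> by (simp add: degree_mult_eq)
  moreover have "lead_coeff h = 1" using h assms by (simp add: lead_coeff_mult)
  ultimately have "h = 1" using degree_0_id[of h] by (simp add: one_pCons)
  then show ?thesis using h by simp
qed

lemma xn_minus_1:
  assumes n: "n > 0"
  shows "(\<Prod>k<n. [:- cis (2 * pi * real k / real n), 1:]) = (monom 1 n - 1 :: complex poly)"
proof (rule monic_dvd_eq)
  show "lead_coeff (\<Prod>k<n. [:- cis (2 * pi * real k / real n), 1:]) = 1" by (rule monic_lin_prod)
  have d: "degree (monom 1 n - 1 :: complex poly) = n"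
  proof -
    have "degree (monom 1 n + (- 1) :: complex poly) = n"
      using n by (subst degree_add_eq_left) (auto simp: degree_monom_eq)
    then show ?thesis by simp
  qed
  then show "lead_coeff (monom 1 n - 1 :: complex poly) = 1"
    using n by (simp add: coeff_diff)
  show "degree (\<Prod>k<n. [:- cis (2 * pi * real k / real n), 1:]) = degree (monom 1 n - 1 :: complex poly)"
    by (simp add: d degree_prod_eq_sum_degree)
  have inj: "inj_on (\<lambda>k. cis (2 * pi * real k / real n)) {..<n}"
    using bij_betw_roots_unity[OF n] by (simp add: bij_betw_def)
  show "(\<Prod>k<n. [:- cis (2 * pi * real k / real n), 1:]) dvd (monom 1 n - 1)"
  proof (rule prod_lin_dvd[OF _ inj])
    show "\<forall>s\<in>{..<n}. poly (monom 1 n - 1) (cis (2 * pi * real s / real n)) = 0"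
      using bij_betw_roots_unity[OF n] by (auto simp: bij_betw_def poly_monom)
  qed simp
qed

lemma divisor_bij:
  fixes n :: nat
  assumes n: "n > 0"
  shows "bij_betw (\<lambda>(d, k). k * (n div d)) (SIGMA d:{d. d dvd n}. {k. k < d \<and> coprime k d}) {..<n}"
  unfolding bij_betw_def
proof (intro conjI)
  show "inj_on (\<lambda>(d, k). k * (n div d)) (SIGMA d:{d. d dvd n}. {k. k < d \<and> coprime k d})"
  proof (rule inj_onI, clarify)
    fix d k d' k'
    assume d: "d dvd n" "k < d" "coprime k d" and d': "d' dvd n" "k' < d'" "coprime k' d'"
      and eq: "k * (n div d) = k' * (n div d')"
    obtain m where m: "n = d * m" using d(1) by (elim dvdE)
    obtain m' where m': "n = d' * m'" using d'(1) by (elim dvdE)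
    have "d > 0 \<and> m > 0" using n m nat_0_less_mult_iff by metis
    moreover have "d' > 0 \<and> m' > 0" using n m' nat_0_less_mult_iff by metis
    ultimately have dpos: "d > 0" "d' > 0" "m > 0" "m' > 0" by auto
    have "n div d = m" using m dpos by simp
    moreover have "n div d' = m'" using m' dpos by simp
    ultimately have "k * m = k' * m'" using eq by simp
    have "k * d' * n = (k * m) * (d * d')" unfolding m by (simp add: mult_ac)
    also have "\<dots> = (k' * m') * (d * d')" using \<open>k * m = k' * m'\<close> by simp
    also have "\<dots> = k' * d * n" unfolding m' by (simp add: mult_ac)
    finally have "k * d' * n = k' * d * n" .
    then have kd: "k * d' = k' * d" using n by simp
    have "d dvd k * d'" using kd by simp
    then have "d dvd d'" using d(3) by (simp add: coprime_dvd_mult_right_iff coprime_commute)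
    moreover have "d' dvd k' * d" using kd by (metis dvd_triv_right)
    then have "d' dvd d" using d'(3) by (simp add: coprime_dvd_mult_right_iff coprime_commute)
    ultimately have "d = d'" by (rule dvd_antisym)
    then show "d = d' \<and> k = k'" using kd dpos by simp
  qed
  show "(\<lambda>(d, k). k * (n div d)) ` (SIGMA d:{d. d dvd n}. {k. k < d \<and> coprime k d}) = {..<n}"
  proof (intro equalityI subsetI)
    fix x assume "x \<in> (\<lambda>(d, k). k * (n div d)) ` (SIGMA d:{d. d dvd n}. {k. k < d \<and> coprime k d})"
    then obtain d k where dk: "d dvd n" "k < d" "x = k * (n div d)" by auto
    obtain m where m: "n = d * m" using dk(1) by (elim dvdE)
    have "d > 0" "m > 0" using n m by auto
    then have "x = k * m" using dk m by simp
    also have "k * m < d * m" using dk(2) \<open>m > 0\<close> by simp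
    finally show "x \<in> {..<n}" using m by simp
  next
    fix j assume j: "j \<in> {..<n}"
    define g where "g = gcd j n"
    have g0: "g > 0" using n by (simp add: g_def)
    have gj: "g dvd j" and gn: "g dvd n" by (simp_all add: g_def)
    obtain a where a: "j = g * a" using gj by (elim dvdE)
    obtain b where b: "n = g * b" using gn by (elim dvdE)
    have bdiv: "n div g = b" and adiv: "j div g = a" using a b g0 by simp_all
    have "a < b" using j a b g0 by simp
    moreover have "coprime a b" using div_gcd_coprime[of j n] n adiv bdiv by (simp add: g_def)
    moreover have "b dvd n" using b by simp
    moreover have "n div b = g" using b n by simp
    ultimately show "j \<in> (\<lambda>(d, k). k * (n div d)) ` (SIGMA d:{d. d dvd n}. {k. k < d \<and> coprime k d})"
      using a by (intro image_eqI[of _ _ "(b, a)"]) (auto simp: mult.commute)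
  qed
qed

lemma prod_PC:
  fixes n :: nat
  assumes n: "n > 0"
  shows "(\<Prod>d\<in>{d. d dvd n}. PC d) = (monom 1 n - 1 :: complex poly)"
proof -
  have fin: "finite {d. d dvd n}" using n by simp
  have "(\<Prod>d\<in>{d. d dvd n}. PC d) =
        (\<Prod>(d, k)\<in>(SIGMA d:{d. d dvd n}. {k. k < d \<and> coprime k d}). [:- cis (2 * pi * real k / real d), 1:])"
    unfolding PC_def by (subst prod.Sigma[symmetric]) (auto simp: fin)
  also have "\<dots> = (\<Prod>(d, k)\<in>(SIGMA d:{d. d dvd n}. {k. k < d \<and> coprime k d}).
          [:- cis (2 * pi * real (k * (n div d)) / real n), 1:])"
  proof (rule prod.cong[OF refl], clarify)
    fix d k assume "d dvd n"
    then obtain m where m: "n = d * m" by (elim dvdE)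
    have "d > 0" "m > 0" using n m by auto
    then have "2 * pi * real (k * (n div d)) / real n = 2 * pi * real k / real d"
      using m by (simp add: field_simps)
    then show "[:- cis (2 * pi * real k / real d), 1:] = [:- cis (2 * pi * real (k * (n div d)) / real n), 1:]"
      by simp
  qed
  also have "\<dots> = (\<Prod>j<n. [:- cis (2 * pi * real j / real n), 1:])"
    using prod.reindex_bij_betw[OF divisor_bij[OF n], of "\<lambda>j. [:- cis (2 * pi * real j / real n), 1:]"]
    by (simp add: case_prod_unfold)
  also have "\<dots> = monom 1 n - 1" by (rule xn_minus_1[OF n])
  finally show ?thesis .
qed

lemma PC_monic: "lead_coeff (PC n) = 1"
  unfolding PC_def by (rule monic_lin_prod)

lemma PC_int: "n > 0 \<Longrightarrow> \<exists>p. map_poly of_int p = PC n \<and> lead_coeff p = 1"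
proof (induction n rule: less_induct)
  case (less n)
  define D where "D = {d. d dvd n} - {n}"
  have finD: "finite D" using less.prems by (simp add: D_def)
  have IH: "\<forall>d\<in>D. \<exists>p. map_poly of_int p = PC d \<and> lead_coeff p = 1"
  proof
    fix d assume "d \<in> D"
    then have "d dvd n" "d \<noteq> n" by (auto simp: D_def)
    have "d \<le> n" using dvd_imp_le \<open>d dvd n\<close> less.prems by blast
    then have "d < n" using \<open>d \<noteq> n\<close> by simp
    have "d \<noteq> 0" using \<open>d dvd n\<close> less.prems by (rule_tac ccontr) simp
    then have "d < n" "d > 0" using \<open>d < n\<close> by simp_all
    then show "\<exists>p. map_poly of_int p = PC d \<and> lead_coeff p = 1" using less.IH by blast
  qed
  define pp where "pp d = (SOME p. map_poly of_int p = PC d \<and> lead_coeff p = 1)" for d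
  have pp: "map_poly of_int (pp d) = PC d \<and> lead_coeff (pp d) = 1" if "d \<in> D" for d
    unfolding pp_def using IH that by (metis (mono_tags, lifting) someI_ex)
  define Q where "Q = (\<Prod>d\<in>D. pp d)"
  have Qm: "lead_coeff Q = 1" unfolding Q_def using pp by (simp add: lead_coeff_prod)
  have mQ: "map_poly of_int Q = (\<Prod>d\<in>D. PC d)" unfolding Q_def map_int_prod using pp by simp
  have "(\<Prod>d\<in>{d. d dvd n}. PC d) = PC n * (\<Prod>d\<in>D. PC d)"
    unfolding D_def by (rule prod.remove) (use less.prems in simp_all)
  then have "map_poly of_int (monom 1 n - 1 :: int poly) = map_poly of_int Q * PC n"
    using prod_PC[OF less.prems] mQ by (simp add: map_int_diff map_int_monom mult.commute)
  then obtain h where h: "PC n = map_poly of_int h" using int_div_monic[OF Qm] by blast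
  have "lead_coeff h = 1" using PC_monic[of n] h by (simp add: map_int_lead)
  then show ?case using h by auto
qed

lemma cyc_eq: "n > 0 \<Longrightarrow> map_poly of_int (cyclotomic_poly n) = PC n"
proof -
  assume "n > 0"
  then obtain p where p: "map_poly of_int p = PC n" using PC_int by blast
  have "map_poly of_int (cyclotomic_poly n) = (\<Prod>k\<in>{k. k < n \<and> coprime k n}. [:- cis (2 * pi * real k / real n), 1:])"
    unfolding cyclotomic_poly_def
  proof (rule theI')
    show "\<exists>!p. map_poly of_int p = (\<Prod>k\<in>{k. k < n \<and> coprime k n}. [:- cis (2 * pi * real k / real n), 1:])"
      using p map_int_inj unfolding PC_def by (intro ex1I[of _ p]) auto
  qed
  then show ?thesis unfolding PC_def .
qed

lemma cyc_monic: "n > 0 \<Longrightarrow> lead_coeff (cyclotomic_poly n) = 1"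
  using cyc_eq[of n] PC_monic[of n] map_int_lead[of "cyclotomic_poly n"] by simp

fun gq :: "'a::comm_ring_1 \<Rightarrow> nat \<Rightarrow> nat \<Rightarrow> 'a" where
  "gq x 0 j = (if j = 0 then 1 else 0)"
| "gq x (Suc n) 0 = 1"
| "gq x (Suc n) (Suc j) = x ^ (n - j) * gq x n j + gq x n (Suc j)"

lemma gq_zero: "n < j \<Longrightarrow> gq x n j = 0"
  by (induction x n j rule: gq.induct) auto

lemma gq_nn: "gq x n n = 1"
  by (induction n) (auto simp: gq_zero)

lemma gq_n0: "gq x n 0 = 1"
  by (cases n) auto

lemma gq_map: "poly (map_poly (of_int :: int \<Rightarrow> 'a::comm_ring_1) (gq [:0, 1:] n j)) x = gq x n j"
  by (induction "[:0, 1::int:]" n j rule: gq.induct)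
     (simp_all add: map_int_add map_int_mult map_int_power map_int_X)

lemma gq_prod: "gq x n j * (\<Prod>i\<in>{1..j}. 1 - x ^ i) = (\<Prod>i<j. 1 - x ^ (n - i))"
proof (induction n arbitrary: j)
  case 0
  then show ?case by (cases j) (auto simp: prod.lessThan_Suc_shift)
next
  case (Suc n)
  show ?case
  proof (cases j)
    case 0 then show ?thesis by simp
  next
    case (Suc j')
    define P where "P = (\<Prod>i<j'. 1 - x ^ (n - i))"
    define A where "A = (\<Prod>i\<in>{1..j'}. 1 - x ^ i)"
    have h1: "gq x n j' * A = P" using Suc.IH[of j'] by (simp add: A_def P_def)
    have h2: "gq x n (Suc j') * (A * (1 - x ^ Suc j')) = P * (1 - x ^ (n - j'))"
      using Suc.IH[of "Suc j'"] by (simp add: A_def P_def prod.nat_ivl_Suc' mult_ac)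
    have lhs: "gq x (Suc n) j * (\<Prod>i\<in>{1..j}. 1 - x ^ i) =
        x ^ (n - j') * (1 - x ^ Suc j') * (gq x n j' * A) + gq x n (Suc j') * (A * (1 - x ^ Suc j'))"
      by (simp add: Suc A_def prod.nat_ivl_Suc' algebra_simps)
    have rhs: "(\<Prod>i<j. 1 - x ^ (Suc n - i)) = (1 - x ^ Suc n) * P"
      by (simp add: Suc P_def prod.lessThan_Suc_shift del: prod.lessThan_Suc)
    show ?thesis
    proof (cases "j' \<le> n")
      case True
      have "n - j' + Suc j' = Suc n" using True by simp
      then have "x ^ (n - j') * x ^ Suc j' = x ^ Suc n" by (metis power_add)
      then show ?thesis unfolding lhs rhs h1 h2 by (simp add: algebra_simps)
    next
      case False
      then have "P = 0" unfolding P_def by (intro prod_zero) (auto intro!: bexI[of _ n])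
      then show ?thesis unfolding lhs rhs h1 h2 by simp
    qed
  qed
qed

lemma cis_nat_2pi: "cis (2 * pi * real (t :: nat)) = 1"
proof -
  have "cis (2 * pi) ^ t = cis (real t * (2 * pi))" by (rule DeMoivre)
  moreover have "cis (2 * pi) = 1" by (simp add: complex_eq_iff)
  ultimately show ?thesis by (simp add: mult_ac)
qed

lemma cis_mod:
  assumes N: "N > 0"
  shows "cis (2 * pi * real m / real N) = cis (2 * pi * real (m mod N) / real N)"
proof -
  have "real m = real N * real (m div N) + real (m mod N)"
    by (metis div_mult_mod_eq of_nat_add of_nat_mult mult.commute)
  then have "2 * pi * real m / real N = 2 * pi * real (m mod N) / real N + 2 * pi * real (m div N)"
    using N by (simp add: field_simps)
  then show ?thesis by (simp add: cis_mult[symmetric] cis_nat_2pi)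
qed

lemma prim_root_pow:
  assumes N: "N > 0" and cop: "coprime k N" and i: "0 < i" "i < N"
  shows "cis (2 * pi * real k / real N) ^ i \<noteq> 1"
proof
  assume eq: "cis (2 * pi * real k / real N) ^ i = 1"
  have "cis (2 * pi * real k / real N) ^ i = cis (2 * pi * real (k * i) / real N)"
    by (simp add: DeMoivre mult_ac)
  also have "\<dots> = cis (2 * pi * real ((k * i) mod N) / real N)" by (rule cis_mod[OF N])
  finally have e2: "(\<lambda>k. cis (2 * pi * real k / real N)) ((k * i) mod N) = (\<lambda>k. cis (2 * pi * real k / real N)) 0"
    using eq by simp
  have inj: "inj_on (\<lambda>k. cis (2 * pi * real k / real N)) {..<N}"
    using bij_betw_roots_unity[OF N] by (simp add: bij_betw_def)
  have "(k * i) mod N = 0"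
    by (rule inj_onD[OF inj e2]) (use N in auto)
  then have "N dvd k * i" by auto
  then have "N dvd i" using cop by (simp add: coprime_dvd_mult_right_iff coprime_commute)
  then show False using i by (auto dest: dvd_imp_le)
qed

lemma gq_root:
  assumes N: "N > 0" and cop: "coprime k N" and j: "0 < j" "j < N"
  shows "gq (cis (2 * pi * real k / real N)) N j = 0"
proof -
  let ?z = "cis (2 * pi * real k / real N)"
  have "?z ^ N = cis (real N * (2 * pi * real k / real N))" by (rule DeMoivre)
  also have "real N * (2 * pi * real k / real N) = 2 * pi * real k" using N by simp
  finally have "?z ^ N = 1" using cis_nat_2pi[of k] by simp
  then have P0: "(\<Prod>i<j. 1 - ?z ^ (N - i)) = 0" using j by (intro prod_zero) (auto intro!: bexI[of _ 0])
  have A0: "(\<Prod>i\<in>{1..j}. 1 - ?z ^ i) \<noteq> 0"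
    using prim_root_pow[OF N cop] j by auto
  show ?thesis using gq_prod[of ?z N j] P0 A0 by (metis mult_eq_0_iff)
qed

lemma gq_vanish:
  fixes q :: "'r::comm_ring_1"
  assumes N: "N > 0" and root: "poly (map_poly of_int (cyclotomic_poly N)) q = 0"
    and j: "0 < j" "j < N"
  shows "gq q N j = 0"
proof -
  let ?S = "{k. k < N \<and> coprime k N}"
  let ?r = "\<lambda>k. cis (2 * pi * real k / real N)"
  have inj: "inj_on ?r ?S"
    using bij_betw_roots_unity[OF N] by (auto simp: bij_betw_def intro: inj_on_subset)
  have "PC N dvd map_poly of_int (gq [:0, 1:] N j)"
    unfolding PC_def
  proof (rule prod_lin_dvd[OF _ inj])
    show "\<forall>s\<in>?S. poly (map_poly of_int (gq [:0, 1:] N j)) (?r s) = 0"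
      using gq_root[OF N _ j] by (simp add: gq_map)
  qed simp
  then obtain S where S: "map_poly of_int (gq [:0, 1:] N j) = PC N * S" by (elim dvdE)
  then have "map_poly of_int (gq [:0, 1:] N j) = map_poly (of_int :: int \<Rightarrow> complex) (cyclotomic_poly N) * S"
    using cyc_eq[OF N] by simp
  then obtain h where "gq [:0, 1:] N j = cyclotomic_poly N * h"
    using int_div_monic[OF cyc_monic[OF N]] by blast
  then have "gq q N j = poly (map_poly of_int (cyclotomic_poly N)) q * poly (map_poly of_int h) q"
    by (metis gq_map map_int_mult poly_mult)
  then show ?thesis using root by simp
qed



lemma Tcar_add: "p \<in> Tcar N \<Longrightarrow> r \<in> Tcar N \<Longrightarrow> (\<lambda>w. p w + r w) \<in> Tcar N"
proof -
  assume p: "p \<in> Tcar N" and r: "r \<in> Tcar N"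
  have "{w. p w + r w \<noteq> 0} \<subseteq> {w. p w \<noteq> 0} \<union> {w. r w \<noteq> 0}" by auto
  then have "finite {w. p w + r w \<noteq> 0}" using p r by (auto simp: Tcar_def intro: finite_subset)
  moreover have "\<forall>w. p w + r w \<noteq> 0 \<longrightarrow> (\<forall>c\<in>set w. 1 \<le> fst c \<and> snd c \<in> grid N)"
    using p r unfolding Tcar_def by (metis (mono_tags, lifting) add_0 mem_Collect_eq add_0_right)
  ultimately show ?thesis by (simp add: Tcar_def)
qed

lemma Tcar_smult: "p \<in> Tcar N \<Longrightarrow> (\<lambda>w. c * p w) \<in> Tcar N"
proof -
  assume p: "p \<in> Tcar N"
  have "{w. c * p w \<noteq> 0} \<subseteq> {w. p w \<noteq> 0}" by auto
  then have "finite {w. c * p w \<noteq> 0}" using p by (auto simp: Tcar_def intro: finite_subset)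
  moreover have "\<forall>w. c * p w \<noteq> 0 \<longrightarrow> (\<forall>c\<in>set w. 1 \<le> fst c \<and> snd c \<in> grid N)"
    using p unfolding Tcar_def by (metis (mono_tags, lifting) mult_zero_right mem_Collect_eq)
  ultimately show ?thesis by (simp add: Tcar_def)
qed

lemma Tcar_tone: "tone \<in> Tcar N"
proof -
  have "{w. (tone :: letter list \<Rightarrow> 'a::comm_ring_1) w \<noteq> 0} = {[]}" by (auto simp: tone_def)
  then show ?thesis by (auto simp: Tcar_def tone_def)
qed

lemma Tcar_tletter: "1 \<le> fst c \<Longrightarrow> snd c \<in> grid N \<Longrightarrow> tletter c \<in> Tcar N"
proof -
  assume c: "1 \<le> fst c" "snd c \<in> grid N"
  have "{w. (tletter c :: letter list \<Rightarrow> 'a::comm_ring_1) w \<noteq> 0} = {[c]}" by (auto simp: tletter_def)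
  then show ?thesis using c by (auto simp: Tcar_def tletter_def)
qed

lemma Tcar_tmul: "p \<in> Tcar N \<Longrightarrow> r \<in> Tcar N \<Longrightarrow> tmul p r \<in> Tcar N"
proof -
  assume p: "p \<in> Tcar N" and r: "r \<in> Tcar N"
  have key: "\<exists>i\<le>length w. p (take i w) \<noteq> 0 \<and> r (drop i w) \<noteq> 0" if "tmul p r w \<noteq> 0" for w
  proof (rule ccontr)
    assume "\<not> ?thesis"
    then have "\<forall>i\<in>{..length w}. p (take i w) * r (drop i w) = 0" by auto
    then have "tmul p r w = 0" unfolding tmul_def by (simp add: sum.neutral)
    then show False using that by simp
  qed
  have "{w. tmul p r w \<noteq> 0} \<subseteq> (\<lambda>(x, y). x @ y) ` ({w. p w \<noteq> 0} \<times> {w. r w \<noteq> 0})"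
  proof
    fix w assume "w \<in> {w. tmul p r w \<noteq> 0}"
    then have tw: "tmul p r w \<noteq> 0" by simp
    obtain i where "p (take i w) \<noteq> 0" "r (drop i w) \<noteq> 0" using key[OF tw] by blast
    then show "w \<in> (\<lambda>(x, y). x @ y) ` ({w. p w \<noteq> 0} \<times> {w. r w \<noteq> 0})"
      by (intro image_eqI[of _ _ "(take i w, drop i w)"]) auto
  qed
  moreover have "finite ((\<lambda>(x, y). x @ y) ` ({w. p w \<noteq> 0} \<times> {w. r w \<noteq> 0}))"
    using p r by (simp add: Tcar_def)
  ultimately have "finite {w. tmul p r w \<noteq> 0}" by (rule finite_subset)
  moreover have "\<forall>c\<in>set w. 1 \<le> fst c \<and> snd c \<in> grid N" if tw: "tmul p r w \<noteq> 0" for w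
  proof -
    obtain i where i: "p (take i w) \<noteq> 0" "r (drop i w) \<noteq> 0" using key[OF tw] by blast
    have "set w \<subseteq> set (take i w) \<union> set (drop i w)"
      by (metis append_take_drop_id set_append subset_refl)
    then show ?thesis using i p r unfolding Tcar_def by blast
  qed
  ultimately show ?thesis by (simp add: Tcar_def)
qed

lemma Tcar_tpow: "p \<in> Tcar N \<Longrightarrow> tpow p n \<in> Tcar N"
  by (induction n) (simp_all add: tpow_def Tcar_tone Tcar_tmul)

section \<open>Multiplication in B\<close>

definition bK :: "nat \<Rightarrow> 'r::comm_ring_1 \<Rightarrow> 'r \<Rightarrow> 'r \<Rightarrow> nat \<times> nat \<Rightarrow> nat \<times> nat \<Rightarrow> nat \<times> nat \<Rightarrow> 'r" where
  "bK N q u a i j p = (if ((fst i + fst j) mod N, (snd i + snd j) mod N) = p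
     then q ^ (snd i * fst j) * u ^ ((fst i + fst j) div N) * a ^ ((snd i + snd j) div N) else 0)"

lemma bmul_K: "bmul N q u a b c p = (\<Sum>i\<in>grid N. \<Sum>j\<in>grid N. b i * c j * bK N q u a i j p)"
  unfolding bmul_def bK_def by (auto simp: mult_ac intro!: sum.cong)

lemma finite_grid [simp]: "finite (grid N)"
  by (simp add: grid_def)

lemma sum_hb: "finite A \<Longrightarrow> i \<in> A \<Longrightarrow> (\<Sum>x\<in>A. hbasis i x * F x) = (F i :: 'a::comm_ring_1)"
  by (simp add: hbasis_def if_distrib[of "\<lambda>t. t * _"] cong: if_cong)

lemma sum_hb': "finite A \<Longrightarrow> i \<in> A \<Longrightarrow> (\<Sum>x\<in>A. F x * hbasis i x) = (F i :: 'a::comm_ring_1)"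
  using sum_hb[of A i F] by (simp add: mult.commute)

lemma bmul_cong:
  "(\<forall>z\<in>grid N. b z = b' z) \<Longrightarrow> (\<forall>z\<in>grid N. c z = c' z) \<Longrightarrow> bmul N q u a b c p = bmul N q u a b' c' p"
  unfolding bmul_K by (auto intro!: sum.cong)

lemma bmul_add_left: "bmul N q u a (\<lambda>z. b z + b' z) c p = bmul N q u a b c p + bmul N q u a b' c p"
  unfolding bmul_K by (simp add: sum.distrib algebra_simps)

lemma bmul_add_right: "bmul N q u a b (\<lambda>z. c z + c' z) p = bmul N q u a b c p + bmul N q u a b c' p"
  unfolding bmul_K by (simp add: sum.distrib algebra_simps)

lemma bmul_smult_left: "bmul N q u a (\<lambda>z. s * b z) c p = s * bmul N q u a b c p"
  unfolding bmul_K by (simp add: sum_distrib_left algebra_simps)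

lemma bmul_smult_right: "bmul N q u a b (\<lambda>z. s * c z) p = s * bmul N q u a b c p"
  unfolding bmul_K by (simp add: sum_distrib_left algebra_simps)

lemma bmul_sum_right: "bmul N q u a b (\<lambda>z. \<Sum>s\<in>S. Y s z) p = (\<Sum>s\<in>S. bmul N q u a b (Y s) p)"
proof -
  have "bmul N q u a b (\<lambda>z. \<Sum>s\<in>S. Y s z) p = (\<Sum>i\<in>grid N. \<Sum>j\<in>grid N. \<Sum>s\<in>S. b i * Y s j * bK N q u a i j p)"
    unfolding bmul_K by (simp add: sum_distrib_left sum_distrib_right mult_ac)
  also have "\<dots> = (\<Sum>s\<in>S. \<Sum>i\<in>grid N. \<Sum>j\<in>grid N. b i * Y s j * bK N q u a i j p)"
    by (subst sum.swap) (simp add: sum.swap[of _ _ S])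
  finally show ?thesis unfolding bmul_K .
qed

lemma bmul_zero_left: "bmul N q u a (\<lambda>_. 0) c p = 0"
  unfolding bmul_K by simp

lemma bmul_zero_right: "bmul N q u a b (\<lambda>_. 0) p = 0"
  unfolding bmul_K by simp

definition W :: "nat \<Rightarrow> 'r::comm_ring_1 \<Rightarrow> 'r \<Rightarrow> nat \<Rightarrow> nat \<Rightarrow> nat \<times> nat \<Rightarrow> 'r" where
  "W N u a m j = (\<lambda>z. u ^ (m div N) * a ^ (j div N) * hbasis (m mod N, j mod N) z)"

lemma grid_mod: "N > 0 \<Longrightarrow> (m mod N, j mod N) \<in> grid N"
  by (simp add: grid_def)

lemma W_mul:
  assumes N: "N > 0"
  shows "bmul N q u a (W N u a m j) (W N u a m' j') p = q ^ ((j mod N) * (m' mod N)) * W N u a (m + m') (j + j') p"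
proof -
  have "bmul N q u a (W N u a m j) (W N u a m' j') p =
     (\<Sum>i\<in>grid N. hbasis (m mod N, j mod N) i * (\<Sum>k\<in>grid N. hbasis (m' mod N, j' mod N) k *
        (u ^ (m div N) * a ^ (j div N) * (u ^ (m' div N) * a ^ (j' div N)) * bK N q u a i k p)))"
    unfolding bmul_K W_def by (simp add: sum_distrib_left mult_ac)
  also have "\<dots> = u ^ (m div N) * a ^ (j div N) * (u ^ (m' div N) * a ^ (j' div N)) *
        bK N q u a (m mod N, j mod N) (m' mod N, j' mod N) p"
    using N by (simp add: sum_hb grid_mod)
  also have "\<dots> = q ^ ((j mod N) * (m' mod N)) * W N u a (m + m') (j + j') p"
  proof -
    have 1: "(m + m') div N = m div N + m' div N + (m mod N + m' mod N) div N" by (rule div_add1_eq)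
    have 2: "(j + j') div N = j div N + j' div N + (j mod N + j' mod N) div N" by (rule div_add1_eq)
    have 3: "(m mod N + m' mod N) mod N = (m + m') mod N" by (simp add: mod_add_eq)
    have 4: "(j mod N + j' mod N) mod N = (j + j') mod N" by (simp add: mod_add_eq)
    show ?thesis unfolding bK_def W_def hbasis_def using 1 2 3 4
      by (auto simp: power_add mult_ac)
  qed
  finally show ?thesis .
qed

lemma W_hb: "i \<in> grid N \<Longrightarrow> W N u a (fst i) (snd i) = hbasis i"
  by (auto simp: W_def grid_def)

lemma W_00: "N > 0 \<Longrightarrow> W N u a 0 0 = hbasis (0, 0)"
  by (auto simp: W_def)

lemma bmul_one_right: "y \<in> grid N \<Longrightarrow> bmul N q u a b (hbasis (0, 0)) y = b y"
proof -
  assume y: "y \<in> grid N"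
  then have N: "N > 0" by (auto simp: grid_def)
  have "bmul N q u a b (hbasis (0, 0)) y = (\<Sum>i\<in>grid N. b i * bK N q u a i (0, 0) y)"
  proof -
    have "bmul N q u a b (hbasis (0, 0)) y = (\<Sum>i\<in>grid N. b i * (\<Sum>j\<in>grid N. hbasis (0, 0) j * bK N q u a i j y))"
      unfolding bmul_K by (simp add: sum_distrib_left mult_ac)
    then show ?thesis using N by (simp add: sum_hb grid_def)
  qed
  also have "\<dots> = (\<Sum>i\<in>grid N. b i * hbasis y i)"
    by (rule sum.cong) (auto simp: bK_def hbasis_def grid_def)
  also have "\<dots> = b y" using y by (simp add: sum_hb' )
  finally show ?thesis .
qed

lemma bmul_one_left: "y \<in> grid N \<Longrightarrow> bmul N q u a (hbasis (0, 0)) b y = b y"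
proof -
  assume y: "y \<in> grid N"
  then have N: "N > 0" by (auto simp: grid_def)
  have "bmul N q u a (hbasis (0, 0)) b y = (\<Sum>i\<in>grid N. hbasis (0, 0) i * (\<Sum>j\<in>grid N. b j * bK N q u a i j y))"
    unfolding bmul_K by (simp add: sum_distrib_left mult_ac)
  also have "\<dots> = (\<Sum>j\<in>grid N. b j * bK N q u a (0, 0) j y)"
    using N by (simp add: sum_hb grid_def)
  also have "\<dots> = (\<Sum>j\<in>grid N. b j * hbasis y j)"
    by (rule sum.cong) (auto simp: bK_def hbasis_def grid_def)
  also have "\<dots> = b y" using y by (simp add: sum_hb' )
  finally show ?thesis .
qed

fun bpw :: "nat \<Rightarrow> 'r::comm_ring_1 \<Rightarrow> 'r \<Rightarrow> 'r \<Rightarrow> (nat \<times> nat \<Rightarrow> 'r) \<Rightarrow> nat \<Rightarrow> nat \<times> nat \<Rightarrow> 'r" where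
  "bpw N q u a b 0 = hbasis (0, 0)"
| "bpw N q u a b (Suc n) = bmul N q u a b (bpw N q u a b n)"

lemma bpw_cong: "\<forall>z\<in>grid N. b z = b' z \<Longrightarrow> bpw N q u a b n y = bpw N q u a b' n y"
proof (induction n arbitrary: y)
  case 0 then show ?case by simp
next
  case (Suc n)
  then show ?case by (simp add: bmul_cong[of N b b'])
qed

lemma W_pow:
  assumes N: "N > 0"
  shows "bpw N q u a (\<lambda>z. s * W N u a m 0 z) n p = s ^ n * W N u a (m * n) 0 p"
proof (induction n arbitrary: p)
  case 0 then show ?case using N by (simp add: W_00)
next
  case (Suc n)
  have "bpw N q u a (\<lambda>z. s * W N u a m 0 z) n = (\<lambda>z. s ^ n * W N u a (m * n) 0 z)"
    using Suc.IH by auto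
  then show ?case using N by (simp add: bmul_smult_left bmul_smult_right W_mul algebra_simps)
qed

definition Tx :: "nat \<Rightarrow> 'r::comm_ring_1 \<Rightarrow> 'r \<Rightarrow> 'r \<Rightarrow> 'r \<Rightarrow> 'r \<Rightarrow> nat \<Rightarrow> nat \<times> nat \<Rightarrow> 'r" where
  "Tx N q u a e d n = (\<lambda>z. \<Sum>j\<le>n. gq q n j * e ^ j * d ^ (n - j) * W N u a (n - j) j z)"

lemma Tx_step:
  assumes N: "2 \<le> N" and n: "n < N"
  shows "bmul N q u a (\<lambda>z. e * W N u a 0 1 z + d * W N u a 1 0 z) (Tx N q u a e d n) p = Tx N q u a e d (Suc n) p"
proof -
  have N0: "N > 0" using N by simp
  have m1: "1 mod N = 1" using N by simp
  have modj: "(n - j) mod N = n - j" for j using n by simp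
  have A: "bmul N q u a (W N u a 0 1) (Tx N q u a e d n) p =
      (\<Sum>j\<le>n. gq q n j * e ^ j * d ^ (n - j) * (q ^ (n - j) * W N u a (n - j) (Suc j) p))"
    unfolding Tx_def using N0 N by (simp add: bmul_sum_right bmul_smult_right W_mul m1 modj)
  have B: "bmul N q u a (W N u a 1 0) (Tx N q u a e d n) p =
      (\<Sum>j\<le>n. gq q n j * e ^ j * d ^ (n - j) * W N u a (Suc (n - j)) j p)"
    unfolding Tx_def using N0 by (simp add: bmul_sum_right bmul_smult_right W_mul)
  define g where "g j = gq q n j * e ^ j * d ^ (Suc n - j) * W N u a (Suc n - j) j p" for j
  have B2: "d * (\<Sum>j\<le>n. gq q n j * e ^ j * d ^ (n - j) * W N u a (Suc (n - j)) j p) = (\<Sum>j\<le>n. g j)"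
    unfolding sum_distrib_left g_def
  proof (rule sum.cong[OF refl])
    fix j assume "j \<in> {..n}"
    then have "Suc n - j = Suc (n - j)" by auto
    then show "d * (gq q n j * e ^ j * d ^ (n - j) * W N u a (Suc (n - j)) j p) =
        gq q n j * e ^ j * d ^ (Suc n - j) * W N u a (Suc n - j) j p" by (simp add: mult_ac)
  qed
  have "(\<Sum>j\<le>n. g j) = (\<Sum>j\<le>Suc n. g j)" by (simp add: g_def gq_zero)
  also have "\<dots> = g 0 + (\<Sum>j\<le>n. g (Suc j))" by (rule sum.atMost_Suc_shift)
  finally have B3: "(\<Sum>j\<le>n. g j) = g 0 + (\<Sum>j\<le>n. g (Suc j))" .
  have "Tx N q u a e d (Suc n) p = g 0 + (\<Sum>j\<le>n. gq q (Suc n) (Suc j) * e ^ Suc j * d ^ (n - j) * W N u a (n - j) (Suc j) p)"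
    unfolding Tx_def by (subst sum.atMost_Suc_shift) (simp add: g_def gq_n0)
  also have "\<dots> = g 0 + (\<Sum>j\<le>n. g (Suc j)) + e * (\<Sum>j\<le>n. gq q n j * e ^ j * d ^ (n - j) * (q ^ (n - j) * W N u a (n - j) (Suc j) p))"
    by (simp add: g_def sum_distrib_left sum.distrib algebra_simps)
  finally have T: "Tx N q u a e d (Suc n) p = g 0 + (\<Sum>j\<le>n. g (Suc j)) + e * (\<Sum>j\<le>n. gq q n j * e ^ j * d ^ (n - j) * (q ^ (n - j) * W N u a (n - j) (Suc j) p))" .
  have "bmul N q u a (\<lambda>z. e * W N u a 0 1 z + d * W N u a 1 0 z) (Tx N q u a e d n) p =
     e * bmul N q u a (W N u a 0 1) (Tx N q u a e d n) p + d * bmul N q u a (W N u a 1 0) (Tx N q u a e d n) p"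
    by (simp only: bmul_add_left bmul_smult_left)
  also have "\<dots> = Tx N q u a e d (Suc n) p"
    unfolding A B B2 B3 T by (simp add: algebra_simps)
  finally show ?thesis .
qed

lemma Tx_N:
  assumes N: "2 \<le> N" and van: "\<forall>j. 0 < j \<and> j < N \<longrightarrow> gq q N j = 0"
  shows "Tx N q u a e d N p = (d ^ N * u + e ^ N * a) * hbasis (0, 0) p"
proof -
  obtain M where M: "N = Suc M" using N by (cases N) auto
  define f where "f j = gq q N j * e ^ j * d ^ (N - j) * W N u a (N - j) j p" for j
  have "Tx N q u a e d N p = (\<Sum>j\<le>Suc M. f j)" unfolding Tx_def f_def M ..
  also have "\<dots> = f 0 + (\<Sum>j\<le>M. f (Suc j))" by (rule sum.atMost_Suc_shift)
  also have "(\<Sum>j\<le>M. f (Suc j)) = (\<Sum>j<Suc M. f (Suc j))" by (simp only: lessThan_Suc_atMost)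
  also have "\<dots> = (\<Sum>j<M. f (Suc j)) + f (Suc M)" by simp
  also have "(\<Sum>j<M. f (Suc j)) = 0"
    using van M by (auto simp: f_def intro!: sum.neutral)
  also have "f (Suc M) = e ^ N * a * hbasis (0, 0) p"
    using M by (simp add: f_def gq_nn W_def)
  also have "f 0 = d ^ N * u * hbasis (0, 0) p"
    using M by (simp add: f_def gq_n0 W_def)
  finally show ?thesis by (simp add: algebra_simps)
qed

lemma bpw_xi:
  assumes N: "2 \<le> N" and xi: "\<forall>z\<in>grid N. xi z = e * W N u a 0 1 z + d * W N u a 1 0 z"
  shows "n \<le> N \<Longrightarrow> y \<in> grid N \<Longrightarrow> bpw N q u a xi n y = Tx N q u a e d n y"
proof (induction n arbitrary: y)
  case 0
  then show ?case using N by (simp add: Tx_def W_00)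
next
  case (Suc n)
  then have "bpw N q u a xi (Suc n) y = bmul N q u a (\<lambda>z. e * W N u a 0 1 z + d * W N u a 1 0 z) (Tx N q u a e d n) y"
    using xi by (simp add: bmul_cong[of N xi _ "bpw N q u a xi n"])
  also have "\<dots> = Tx N q u a e d (Suc n) y" using Suc.prems N by (intro Tx_step) auto
  finally show ?case .
qed

section \<open>Tensor products\<close>

lemma sum_single: "finite A \<Longrightarrow> x \<in> A \<Longrightarrow> (\<forall>y\<in>A. y \<noteq> x \<longrightarrow> g y = 0) \<Longrightarrow> sum g A = g x"
  by (subst sum.remove[of A x]) (auto intro!: sum.neutral)

lemma sum_two: "finite A \<Longrightarrow> x1 \<in> A \<Longrightarrow> x2 \<in> A \<Longrightarrow> x1 \<noteq> x2 \<Longrightarrow>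
    (\<forall>y\<in>A. y \<noteq> x1 \<and> y \<noteq> x2 \<longrightarrow> g y = 0) \<Longrightarrow> sum g A = g x1 + g x2"
proof -
  assume a: "finite A" "x1 \<in> A" "x2 \<in> A" "x1 \<noteq> x2" "\<forall>y\<in>A. y \<noteq> x1 \<and> y \<noteq> x2 \<longrightarrow> g y = 0"
  have "sum g A = sum g {x1, x2}" using a by (intro sum.mono_neutral_right) auto
  then show ?thesis using a by simp
qed

lemma tens_right_unit:
  assumes "\<forall>b. mul b one y = b y" "\<forall>b. mul b (\<lambda>_. 0) y = 0" "p \<in> grid N"
  shows "tens_mul N q mul F (tens_one one) p y = F p y"
proof -
  have "tens_mul N q mul F (tens_one one) p y =
     (\<Sum>k\<in>grid N. if ((fst k + fst (0::nat,0::nat)) mod N, snd k + snd (0::nat,0::nat)) = p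
        then q ^ (snd k * fst (0::nat,0::nat)) * mul (F k) (tens_one one (0,0)) y else 0)"
    unfolding tens_mul_def
    by (rule sum.cong[OF refl], rule sum_single) (use assms(3) in \<open>auto simp: tens_one_def grid_def assms(2)\<close>)
  also have "\<dots> = (\<Sum>k\<in>grid N. if k = p then F k y else 0)"
    by (rule sum.cong[OF refl]) (auto simp: tens_one_def assms(1) grid_def)
  also have "\<dots> = F p y" using assms(3) by simp
  finally show ?thesis .
qed

lemma tens_left_unit:
  assumes "\<forall>b. mul one b y = b y" "\<forall>b. mul (\<lambda>_. 0) b y = 0" "p \<in> grid N"
  shows "tens_mul N q mul (tens_one one) F p y = F p y"
proof -
  have "tens_mul N q mul (tens_one one) F p y =
     (\<Sum>l\<in>grid N. if ((fst (0::nat,0::nat) + fst l) mod N, snd (0::nat,0::nat) + snd l) = p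
        then q ^ (snd (0::nat,0::nat) * fst l) * mul (tens_one one (0,0)) (F l) y else 0)"
    unfolding tens_mul_def
    by (rule sum_single) (use assms(3) in \<open>auto simp: tens_one_def grid_def assms(2) intro!: sum.neutral\<close>)
  also have "\<dots> = (\<Sum>l\<in>grid N. if l = p then F l y else 0)"
    by (rule sum.cong[OF refl]) (auto simp: tens_one_def assms(1) grid_def)
  also have "\<dots> = F p y" using assms(3) by simp
  finally show ?thesis .
qed

lemma tens_pow_0: "tens_pow N q mul one F 0 = tens_one one"
  by (simp add: tens_pow_def)

lemma tens_pow_Suc: "tens_pow N q mul one F (Suc n) = tens_mul N q mul F (tens_pow N q mul one F n)"
  by (simp add: tens_pow_def)

definition hK :: "nat \<Rightarrow> 'r::comm_ring_1 \<Rightarrow> nat \<times> nat \<Rightarrow> nat \<times> nat \<Rightarrow> nat \<times> nat \<Rightarrow> 'r" where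
  "hK N q i j p = (if ((fst i + fst j) mod N, snd i + snd j) = p then q ^ (snd i * fst j) else 0)"

lemma hmul_K: "hmul N q b c p = (\<Sum>i\<in>grid N. \<Sum>j\<in>grid N. b i * c j * hK N q i j p)"
  unfolding hmul_def hK_def by (auto simp: mult_ac intro!: sum.cong)

lemma hmul_one_right: "y \<in> grid N \<Longrightarrow> hmul N q b (hbasis (0, 0)) y = b y"
proof -
  assume y: "y \<in> grid N"
  then have N: "N > 0" by (auto simp: grid_def)
  have "hmul N q b (hbasis (0, 0)) y = (\<Sum>i\<in>grid N. b i * (\<Sum>j\<in>grid N. hbasis (0, 0) j * hK N q i j y))"
    unfolding hmul_K by (simp add: sum_distrib_left mult_ac)
  also have "\<dots> = (\<Sum>i\<in>grid N. b i * hK N q i (0, 0) y)" using N by (simp add: sum_hb grid_def)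
  also have "\<dots> = (\<Sum>i\<in>grid N. b i * hbasis y i)"
    by (rule sum.cong) (auto simp: hK_def hbasis_def grid_def)
  also have "\<dots> = b y" using y by (simp add: sum_hb')
  finally show ?thesis .
qed

lemma hmul_one_left: "y \<in> grid N \<Longrightarrow> hmul N q (hbasis (0, 0)) b y = b y"
proof -
  assume y: "y \<in> grid N"
  then have N: "N > 0" by (auto simp: grid_def)
  have "hmul N q (hbasis (0, 0)) b y = (\<Sum>i\<in>grid N. hbasis (0, 0) i * (\<Sum>j\<in>grid N. b j * hK N q i j y))"
    unfolding hmul_K by (simp add: sum_distrib_left mult_ac)
  also have "\<dots> = (\<Sum>j\<in>grid N. b j * hK N q (0, 0) j y)" using N by (simp add: sum_hb grid_def)
  also have "\<dots> = (\<Sum>j\<in>grid N. b j * hbasis y j)"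
    by (rule sum.cong) (auto simp: hK_def hbasis_def grid_def)
  also have "\<dots> = b y" using y by (simp add: sum_hb')
  finally show ?thesis .
qed

lemma hmul_zero_left: "hmul N q (\<lambda>_. 0) c p = 0"
  unfolding hmul_K by simp

lemma hmul_zero_right: "hmul N q b (\<lambda>_. 0) p = 0"
  unfolding hmul_K by simp

lemma comult_00: "l \<in> grid N \<Longrightarrow> j \<in> grid N \<Longrightarrow> comult N q (0, 0) l j = (if l = (0, 0) then hbasis (0, 0) j else 0)"
  unfolding comult_def
  by (simp add: tens_pow_0 tens_left_unit hmul_one_left hmul_zero_left, simp add: tens_one_def)

lemma comult_10: "l \<in> grid N \<Longrightarrow> j \<in> grid N \<Longrightarrow> comult N q (1, 0) l j = gen_g l j"
  unfolding comult_def
  by (simp add: tens_pow_0 tens_pow_Suc tens_right_unit hmul_one_right hmul_zero_right)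

lemma comult_01: "l \<in> grid N \<Longrightarrow> j \<in> grid N \<Longrightarrow> comult N q (0, 1) l j = gen_x l j"
  unfolding comult_def
  by (simp add: tens_pow_0 tens_pow_Suc tens_right_unit tens_left_unit hmul_one_right hmul_zero_right
      hmul_one_left hmul_zero_left)

lemma grid_iff: "(x \<in> grid N) = (fst x < N \<and> snd x < N)"
  by (cases x) (simp add: grid_def)

lemma tm_left_single:
  assumes "k0 \<in> grid N" "\<forall>k\<in>grid N. k \<noteq> k0 \<longrightarrow> (\<forall>l. mul (F k) (G l) y = 0)"
  shows "tens_mul N q mul F G p y = (\<Sum>l\<in>grid N. if ((fst k0 + fst l) mod N, snd k0 + snd l) = p
      then q ^ (snd k0 * fst l) * mul (F k0) (G l) y else 0)"
  unfolding tens_mul_def by (rule sum_single) (use assms in \<open>auto intro!: sum.neutral\<close>)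

lemma tm_left_two:
  assumes "k1 \<in> grid N" "k2 \<in> grid N" "k1 \<noteq> k2" "\<forall>k\<in>grid N. k \<noteq> k1 \<and> k \<noteq> k2 \<longrightarrow> (\<forall>l. mul (F k) (G l) y = 0)"
  shows "tens_mul N q mul F G p y = (\<Sum>l\<in>grid N. if ((fst k1 + fst l) mod N, snd k1 + snd l) = p
      then q ^ (snd k1 * fst l) * mul (F k1) (G l) y else 0) +
    (\<Sum>l\<in>grid N. if ((fst k2 + fst l) mod N, snd k2 + snd l) = p
      then q ^ (snd k2 * fst l) * mul (F k2) (G l) y else 0)"
  unfolding tens_mul_def by (rule sum_two) (use assms in \<open>auto intro!: sum.neutral\<close>)

lemma tm_gen_g:
  assumes N: "2 \<le> N"
  shows "tens_mul N q (bmul N q u a) gen_g G p y =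
    (\<Sum>l\<in>grid N. if (Suc (fst l) mod N, snd l) = p then bmul N q u a (hbasis (1, 0)) (G l) y else 0)"
  by (subst tm_left_single[of "(1, 0)"]) (use N in \<open>auto simp: grid_iff gen_g_def bmul_zero_left cong: if_cong\<close>)

lemma tm_gen_x:
  assumes N: "2 \<le> N"
  shows "tens_mul N q (bmul N q u a) gen_x G p y =
    (\<Sum>l\<in>grid N. if (fst l mod N, Suc (snd l)) = p then q ^ fst l * bmul N q u a (hbasis (0, 0)) (G l) y else 0) +
    (\<Sum>l\<in>grid N. if (Suc (fst l) mod N, snd l) = p then bmul N q u a (hbasis (0, 1)) (G l) y else 0)"
  by (subst tm_left_two[of "(0, 1)" _ "(1, 0)"]) (use N in \<open>auto simp: grid_iff gen_x_def bmul_zero_left cong: if_cong\<close>)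

abbreviation Gp :: "nat \<Rightarrow> 'r::comm_ring_1 \<Rightarrow> 'r \<Rightarrow> 'r \<Rightarrow> nat \<Rightarrow> nat \<times> nat \<Rightarrow> nat \<times> nat \<Rightarrow> 'r" where
  "Gp N q u a m \<equiv> tens_pow N q (bmul N q u a) (hbasis (0, 0)) gen_g m"

abbreviation Xp :: "nat \<Rightarrow> 'r::comm_ring_1 \<Rightarrow> 'r \<Rightarrow> 'r \<Rightarrow> nat \<Rightarrow> nat \<times> nat \<Rightarrow> nat \<times> nat \<Rightarrow> 'r" where
  "Xp N q u a n \<equiv> tens_pow N q (bmul N q u a) (hbasis (0, 0)) gen_x n"

lemma Gp_val:
  assumes N: "2 \<le> N"
  shows "m < N \<Longrightarrow> l \<in> grid N \<Longrightarrow> z \<in> grid N \<Longrightarrow> Gp N q u a m l z = (if l = (m, 0) \<and> z = (m, 0) then 1 else 0)"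
proof (induction m arbitrary: l z)
  case 0
  then show ?case by (auto simp: tens_pow_0 tens_one_def hbasis_def)
next
  case (Suc m)
  have N0: "N > 0" using N by simp
  have m: "m < N" using Suc.prems by simp
  have mg: "(m, 0) \<in> grid N" using m N0 by (simp add: grid_def)
  have zero: "bmul N q u a (hbasis (1, 0)) (Gp N q u a m l') z = 0" if "l' \<in> grid N" "l' \<noteq> (m, 0)" for l'
  proof -
    have "bmul N q u a (hbasis (1, 0)) (Gp N q u a m l') z = bmul N q u a (hbasis (1, 0)) (\<lambda>_. 0) z"
      using Suc.IH[OF m that(1)] that(2) by (intro bmul_cong) auto
    then show ?thesis by (simp add: bmul_zero_right)
  qed
  have one: "bmul N q u a (hbasis (1, 0)) (Gp N q u a m (m, 0)) z = hbasis (Suc m, 0) z"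
  proof -
    have "bmul N q u a (hbasis (1, 0)) (Gp N q u a m (m, 0)) z = bmul N q u a (W N u a 1 0) (W N u a m 0) z"
      using Suc.IH[OF m mg] N m by (intro bmul_cong) (auto simp: W_def hbasis_def)
    also have "\<dots> = W N u a (Suc m) 0 z" using N0 by (simp add: W_mul)
    also have "\<dots> = hbasis (Suc m, 0) z" using Suc.prems N0 by (simp add: W_def)
    finally show ?thesis .
  qed
  have "Gp N q u a (Suc m) l z = (if (Suc m mod N, 0) = l then bmul N q u a (hbasis (1, 0)) (Gp N q u a m (m, 0)) z else 0)"
    unfolding tens_pow_Suc tm_gen_g[OF N]
    by (subst sum_single[of _ "(m, 0)"]) (use mg zero in auto)
  then show ?case using one Suc.prems by (auto simp: hbasis_def)
qed

lemma bmul_hb_left: "i0 \<in> grid N \<Longrightarrow> bmul N q u a (hbasis i0) Y y = (\<Sum>j\<in>grid N. Y j * bK N q u a i0 j y)"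
proof -
  assume i0: "i0 \<in> grid N"
  have "bmul N q u a (hbasis i0) Y y = (\<Sum>i\<in>grid N. hbasis i0 i * (\<Sum>j\<in>grid N. Y j * bK N q u a i j y))"
    unfolding bmul_K by (simp add: sum_distrib_left mult_ac)
  also have "\<dots> = (\<Sum>j\<in>grid N. Y j * bK N q u a i0 j y)" using i0 by (simp add: sum_hb)
  finally show ?thesis .
qed

lemma Xp_supp:
  assumes N: "2 \<le> N"
  shows "n < N \<Longrightarrow> b \<in> grid N \<Longrightarrow> j \<in> grid N \<Longrightarrow> Xp N q u a n b j \<noteq> 0 \<Longrightarrow>
    fst j = 0 \<and> snd j + snd b = n \<and> fst b = snd j"
proof (induction n arbitrary: b j)
  case 0
  then show ?case by (auto simp: tens_pow_0 tens_one_def hbasis_def split: if_splits)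
next
  case (Suc n)
  have n: "n < N" using Suc.prems by simp
  show ?case
  proof (rule ccontr)
    assume nC: "\<not> (fst j = 0 \<and> snd j + snd b = Suc n \<and> fst b = snd j)"
    have T1: "(\<Sum>l\<in>grid N. if (fst l mod N, Suc (snd l)) = b then q ^ fst l * bmul N q u a (hbasis (0, 0)) (Xp N q u a n l) j else 0) = 0"
    proof (rule sum.neutral, rule ballI)
      fix l assume l: "l \<in> grid N"
      show "(if (fst l mod N, Suc (snd l)) = b then q ^ fst l * bmul N q u a (hbasis (0, 0)) (Xp N q u a n l) j else 0) = 0"
      proof (cases "(fst l mod N, Suc (snd l)) = b \<and> Xp N q u a n l j \<noteq> 0")
        case True
        then have "fst j = 0 \<and> snd j + snd l = n \<and> fst l = snd j" using Suc.IH[OF n l Suc.prems(3)] by blast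
        then show ?thesis using True nC l by (auto simp: grid_iff)
      next
        case False
        then show ?thesis using Suc.prems(3) by (auto simp: bmul_one_left)
      qed
    qed
    have T2: "(\<Sum>l\<in>grid N. if (Suc (fst l) mod N, snd l) = b then bmul N q u a (hbasis (0, 1)) (Xp N q u a n l) j else 0) = 0"
    proof (rule sum.neutral, rule ballI)
      fix l assume l: "l \<in> grid N"
      have "bmul N q u a (hbasis (0, 1)) (Xp N q u a n l) j = 0" if cond: "(Suc (fst l) mod N, snd l) = b"
      proof -
        have "bmul N q u a (hbasis (0, 1)) (Xp N q u a n l) j = (\<Sum>i\<in>grid N. Xp N q u a n l i * bK N q u a (0, 1) i j)"
          using N by (intro bmul_hb_left) (simp add: grid_iff)
        also have "\<dots> = 0"
        proof (rule sum.neutral, rule ballI)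
          fix i assume i: "i \<in> grid N"
          show "Xp N q u a n l i * bK N q u a (0, 1) i j = 0"
          proof (rule ccontr)
            assume ne: "Xp N q u a n l i * bK N q u a (0, 1) i j \<noteq> 0"
            then have "Xp N q u a n l i \<noteq> 0" by auto
            then have s: "fst i = 0 \<and> snd i + snd l = n \<and> fst l = snd i" using Suc.IH[OF n l i] by blast
            have "bK N q u a (0, 1) i j \<noteq> 0" using ne by auto
            then have "j = (fst i mod N, Suc (snd i) mod N)" by (auto simp: bK_def split: if_splits)
            then have "j = (0, Suc (snd i))" using s Suc.prems(1) by auto
            moreover have "b = (Suc (snd i), snd l)" using cond s Suc.prems(1) by auto
            ultimately show False using nC s by auto
          qed
        qed
        finally show ?thesis .
      qed
      then show "(if (Suc (fst l) mod N, snd l) = b then bmul N q u a (hbasis (0, 1)) (Xp N q u a n l) j else 0) = 0"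
        by auto
    qed
    have "Xp N q u a (Suc n) b j = 0"
      unfolding tens_pow_Suc tm_gen_x[OF N] T1 T2 by simp
    then show False using Suc.prems(4) by simp
  qed
qed

lemma Xp_val:
  assumes N: "2 \<le> N"
  shows "n < N \<Longrightarrow> Xp N q u a n (0, n) (0, 0) = 1"
proof (induction n)
  case 0
  then show ?case by (simp add: tens_pow_0 tens_one_def hbasis_def)
next
  case (Suc n)
  have n: "n < N" using Suc.prems by simp
  have g00: "(0, 0) \<in> grid N" using N by (simp add: grid_iff)
  have T1: "(\<Sum>l\<in>grid N. if (fst l mod N, Suc (snd l)) = (0, Suc n) then q ^ fst l * bmul N q u a (hbasis (0, 0)) (Xp N q u a n l) (0, 0) else 0) = 1"
  proof (subst sum_single[of _ "(0, n)"])
    show "(0, n) \<in> grid N" using n by (simp add: grid_iff)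
    show "\<forall>l\<in>grid N. l \<noteq> (0, n) \<longrightarrow> (if (fst l mod N, Suc (snd l)) = (0, Suc n) then q ^ fst l * bmul N q u a (hbasis (0, 0)) (Xp N q u a n l) (0, 0) else 0) = 0"
      by (auto simp: grid_iff)
    show "(if (fst (0::nat, n) mod N, Suc (snd (0::nat, n))) = (0, Suc n) then q ^ fst (0::nat, n) * bmul N q u a (hbasis (0, 0)) (Xp N q u a n (0, n)) (0, 0) else 0) = 1"
      using Suc.IH[OF n] g00 by (simp add: bmul_one_left)
  qed simp
  have T2: "(\<Sum>l\<in>grid N. if (Suc (fst l) mod N, snd l) = (0, Suc n) then bmul N q u a (hbasis (0, 1)) (Xp N q u a n l) (0, 0) else 0) = 0"
  proof (rule sum.neutral, rule ballI)
    fix l assume l: "l \<in> grid N"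
    have "bmul N q u a (hbasis (0, 1)) (Xp N q u a n l) (0, 0) = 0" if cond: "snd l = Suc n"
    proof -
      have "bmul N q u a (hbasis (0, 1)) (Xp N q u a n l) (0, 0) = (\<Sum>i\<in>grid N. Xp N q u a n l i * bK N q u a (0, 1) i (0, 0))"
        using N by (intro bmul_hb_left) (simp add: grid_iff)
      also have "\<dots> = 0"
      proof (rule sum.neutral, rule ballI)
        fix i assume i: "i \<in> grid N"
        have "Xp N q u a n l i = 0"
        proof (rule ccontr)
          assume "Xp N q u a n l i \<noteq> 0"
          then have "snd i + snd l = n" using Xp_supp[OF N n l i] by blast
          then show False using cond by simp
        qed
        then show "Xp N q u a n l i * bK N q u a (0, 1) i (0, 0) = 0" by simp
      qed
      finally show ?thesis .
    qed
    then show "(if (Suc (fst l) mod N, snd l) = (0, Suc n) then bmul N q u a (hbasis (0, 1)) (Xp N q u a n l) (0, 0) else 0) = 0"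
      by auto
  qed
  show ?case unfolding tens_pow_Suc tm_gen_x[OF N] T1 T2 by simp
qed

lemma BB:
  assumes N: "2 \<le> N" and k: "k \<in> grid N" and k0: "k0 \<in> grid N"
  shows "bcoact_basis N q u a k k0 (fst k0, 0) = (if k = k0 then 1 else 0)"
proof -
  obtain m n where kmn: "k = (m, n)" by (cases k)
  have m: "m < N" and n: "n < N" using k kmn by (auto simp: grid_iff)
  let ?y = "(fst k0, 0::nat)"
  have y: "?y \<in> grid N" using k0 N by (simp add: grid_iff)
  have mg: "(m, 0) \<in> grid N" using m N by (simp add: grid_iff)
  have Gz: "bmul N q u a (Gp N q u a m a') Y y' = 0" if "a' \<in> grid N" "a' \<noteq> (m, 0)" for a' Y y'
  proof -
    have "bmul N q u a (Gp N q u a m a') Y y' = bmul N q u a (\<lambda>_. 0) Y y'"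
      using Gp_val[OF N m that(1)] that(2) by (intro bmul_cong) auto
    then show ?thesis by (simp add: bmul_zero_left)
  qed
  have Gm: "bmul N q u a (Gp N q u a m (m, 0)) Y y' = (\<Sum>j\<in>grid N. Y j * bK N q u a (m, 0) j y')" for Y y'
  proof -
    have "\<forall>z\<in>grid N. Gp N q u a m (m, 0) z = hbasis (m, 0) z"
    proof
      fix z assume z: "z \<in> grid N"
      have h1: "hbasis (m, 0) z = (if z = (m, 0) then 1 else (0 :: 'a))" by (simp add: hbasis_def)
      have h2: "Gp N q u a m (m, 0) z = (if z = (m, 0) then 1 else 0)" by (subst Gp_val[OF N m mg z]) simp
      show "Gp N q u a m (m, 0) z = hbasis (m, 0) z" by (simp only: h1 h2)
    qed
    then have "bmul N q u a (Gp N q u a m (m, 0)) Y y' = bmul N q u a (hbasis (m, 0)) Y y'"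
      by (intro bmul_cong) auto
    then show ?thesis using mg by (simp add: bmul_hb_left)
  qed
  have other: "(\<Sum>j\<in>grid N. Xp N q u a n b j * bK N q u a (m, 0) j ?y) = 0" if "b \<in> grid N" "b \<noteq> (0, n)" for b
  proof (rule sum.neutral, rule ballI)
    fix j assume j: "j \<in> grid N"
    show "Xp N q u a n b j * bK N q u a (m, 0) j ?y = 0"
    proof (rule ccontr)
      assume ne: "Xp N q u a n b j * bK N q u a (m, 0) j ?y \<noteq> 0"
      then have "Xp N q u a n b j \<noteq> 0" by auto
      then have s: "fst j = 0 \<and> snd j + snd b = n \<and> fst b = snd j" using Xp_supp[OF N n that(1) j] by blast
      have "bK N q u a (m, 0) j ?y \<noteq> 0" using ne by auto
      then have "snd j mod N = 0" by (auto simp: bK_def split: if_splits)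
      then have "snd j = 0" using j by (simp add: grid_iff)
      then show False using s that(2) by (cases b) auto
    qed
  qed
  have at0n: "(\<Sum>j\<in>grid N. Xp N q u a n (0, n) j * bK N q u a (m, 0) j ?y) = (if m = fst k0 then 1 else 0)"
  proof (subst sum_single[of _ "(0, 0)"])
    show "(0, 0) \<in> grid N" using N by (simp add: grid_iff)
    show "\<forall>j\<in>grid N. j \<noteq> (0, 0) \<longrightarrow> Xp N q u a n (0, n) j * bK N q u a (m, 0) j ?y = 0"
    proof (intro ballI impI)
      fix j assume j: "j \<in> grid N" "j \<noteq> (0, 0)"
      have "Xp N q u a n (0, n) j = 0"
      proof (rule ccontr)
        assume ne: "Xp N q u a n (0, n) j \<noteq> 0"
        have g0n: "(0, n) \<in> grid N" using n N by (simp add: grid_iff)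
        have "fst j = 0 \<and> snd j + snd (0::nat, n) = n" using Xp_supp[OF N n g0n j(1) ne] by blast
        then have "fst j = 0 \<and> snd j + n = n" by simp
        then show False using j(2) by (cases j) auto
      qed
      then show "Xp N q u a n (0, n) j * bK N q u a (m, 0) j ?y = 0" by simp
    qed
    show "Xp N q u a n (0, n) (0, 0) * bK N q u a (m, 0) (0, 0) ?y = (if m = fst k0 then 1 else 0)"
      using Xp_val[OF N n] m by (auto simp: bK_def)
  qed simp
  have "bcoact_basis N q u a k k0 ?y =
     (\<Sum>b\<in>grid N. if ((m + fst b) mod N, 0 + snd b) = k0 then q ^ (0 * fst b) *
         bmul N q u a (Gp N q u a m (m, 0)) (Xp N q u a n b) ?y else 0)"
    unfolding bcoact_basis_def kmn fst_conv snd_conv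
    by (subst tm_left_single[of "(m, 0)"]) (use mg Gz in \<open>auto cong: if_cong\<close>)
  also have "\<dots> = (if (m mod N, n) = k0 then (\<Sum>j\<in>grid N. Xp N q u a n (0, n) j * bK N q u a (m, 0) j ?y) else 0)"
  proof (subst sum_single[of _ "(0, n)"])
    show "(0, n) \<in> grid N" using n N by (simp add: grid_iff)
    show "\<forall>b\<in>grid N. b \<noteq> (0, n) \<longrightarrow> (if ((m + fst b) mod N, 0 + snd b) = k0 then q ^ (0 * fst b) *
         bmul N q u a (Gp N q u a m (m, 0)) (Xp N q u a n b) ?y else 0) = 0"
      using other by (simp add: Gm)
  qed (simp_all add: Gm)
  also have "\<dots> = (if k = k0 then 1 else 0)"
    using m k0 at0n by (cases k0) (auto simp: kmn)
  finally show ?thesis .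
qed

section \<open>Comodule algebra maps\<close>

lemma tmul_tone: "tmul b tone w = b w"
  unfolding tmul_def by (subst sum_single[of _ "length w"]) (auto simp: tone_def)

lemma tmul_zero: "tmul b (\<lambda>_. 0) w = 0"
  unfolding tmul_def by simp

lemma Tcoact_letter:
  assumes l: "l \<in> grid N"
  shows "Tcoact N q (tletter c) l = letter_coact N q c l"
proof
  fix w'
  have S: "{w. (tletter c :: letter list \<Rightarrow> 'a) w \<noteq> 0} = {[c]}" by (auto simp: tletter_def)
  have "Tcoact N q (tletter c) l w' = word_coact N q [c] l w'"
    unfolding Tcoact_def S by (simp add: tletter_def)
  also have "\<dots> = letter_coact N q c l w'"
    unfolding word_coact_def by (simp add: tens_right_unit[OF _ _ l] tmul_tone tmul_zero)
  finally show "Tcoact N q (tletter c) l w' = letter_coact N q c l w'" .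
qed

lemma f_zero:
  assumes fm: "comod_alg_map N q u a f" and z: "z \<in> grid N"
  shows "f (\<lambda>_. 0) z = 0"
proof -
  have "f (\<lambda>w. 0 * tone w) z = 0 * f tone z"
    using fm z Tcar_tone unfolding comod_alg_map_def by blast
  then show ?thesis by simp
qed

lemma f_extract:
  assumes fm: "comod_alg_map N q u a f" and N: "2 \<le> N" and p: "p \<in> Tcar N" and k0: "k0 \<in> grid N"
  shows "f p k0 = f (Tcoact N q p k0) (fst k0, 0)"
proof -
  have y: "(fst k0, 0) \<in> grid N" using k0 N by (simp add: grid_iff)
  have "bcoact N q u a (f p) k0 (fst k0, 0) = f (Tcoact N q p k0) (fst k0, 0)"
    using fm p k0 y unfolding comod_alg_map_def by blast
  moreover have "bcoact N q u a (f p) k0 (fst k0, 0) = f p k0"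
  proof -
    have "bcoact N q u a (f p) k0 (fst k0, 0) = (\<Sum>k\<in>grid N. if k = k0 then f p k else 0)"
      unfolding bcoact_def by (rule sum.cong[OF refl]) (simp add: BB[OF N _ k0])
    then show ?thesis using k0 by simp
  qed
  ultimately show ?thesis by simp
qed

lemma f_tpow:
  assumes fm: "comod_alg_map N q u a f" and p: "p \<in> Tcar N"
  shows "z \<in> grid N \<Longrightarrow> f (tpow p n) z = bpw N q u a (f p) n z"
proof (induction n arbitrary: z)
  case 0
  then show ?case using fm unfolding comod_alg_map_def tpow_def by simp
next
  case (Suc n)
  have "f (tpow p (Suc n)) z = bmul N q u a (f p) (f (tpow p n)) z"
    using fm p Tcar_tpow[OF p, of n] Suc.prems unfolding comod_alg_map_def tpow_def by simp
  also have "\<dots> = bmul N q u a (f p) (bpw N q u a (f p) n) z"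
    using Suc.IH by (intro bmul_cong) auto
  finally show ?case by simp
qed

lemma W_01: "2 \<le> N \<Longrightarrow> W N u a 0 1 = hbasis (0, 1)"
  using W_hb[of "(0, 1)" N u a] by (simp add: grid_iff)

lemma W_10: "2 \<le> N \<Longrightarrow> W N u a 1 0 = hbasis (1, 0)"
  using W_hb[of "(1, 0)" N u a] by (simp add: grid_iff)

lemma Tco_E:
  assumes N: "2 \<le> N" and l: "l \<in> grid N"
  shows "Tcoact N q (tletter (1, (0, 0))) l = (if l = (0, 0) then tletter (1, (0, 0)) else (\<lambda>_. 0))"
proof
  fix w
  have g: "(0, 0) \<in> grid N" using N by (simp add: grid_iff)
  have "Tcoact N q (tletter (1, (0, 0))) l w = (\<Sum>j\<in>grid N. (if l = (0, 0) then hbasis (0, 0) j else 0) * tletter (1, j) w)"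
    unfolding Tcoact_letter[OF l] letter_coact_def using l by (intro sum.cong) (simp_all add: comult_00)
  also have "\<dots> = (if l = (0, 0) then tletter (1, (0, 0)) else (\<lambda>_. 0)) w"
    using g by (simp add: sum_hb)
  finally show "Tcoact N q (tletter (1, (0, 0))) l w = (if l = (0, 0) then tletter (1, (0, 0)) else (\<lambda>_. 0)) w" .
qed

lemma Tco_G:
  assumes N: "2 \<le> N" and l: "l \<in> grid N"
  shows "Tcoact N q (tletter (1, (1, 0))) l = (if l = (1, 0) then tletter (1, (1, 0)) else (\<lambda>_. 0))"
proof
  fix w
  have g: "(1, 0) \<in> grid N" using N by (simp add: grid_iff)
  have "Tcoact N q (tletter (1, (1, 0))) l w = (\<Sum>j\<in>grid N. (if l = (1, 0) then hbasis (1, 0) j else 0) * tletter (1, j) w)"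
    unfolding Tcoact_letter[OF l] letter_coact_def
  proof (rule sum.cong[OF refl])
    fix j assume j: "j \<in> grid N"
    show "comult N q (snd (1::nat, (1::nat, 0::nat))) l j * tletter (fst (1::nat, (1::nat, 0::nat)), j) w = (if l = (1, 0) then hbasis (1, 0) j else 0) * tletter (1, j) w"
      using comult_10[OF l j, of q] by (simp add: gen_g_def)
  qed
  also have "\<dots> = (if l = (1, 0) then tletter (1, (1, 0)) else (\<lambda>_. 0)) w"
    using g by (simp add: sum_hb)
  finally show "Tcoact N q (tletter (1, (1, 0))) l w = (if l = (1, 0) then tletter (1, (1, 0)) else (\<lambda>_. 0)) w" .
qed

lemma Tco_X:
  assumes N: "2 \<le> N" and l: "l \<in> grid N"
  shows "Tcoact N q (tletter (1, (0, 1))) l = (if l = (0, 1) then tletter (1, (0, 0)) else if l = (1, 0) then tletter (1, (0, 1)) else (\<lambda>_. 0))"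
proof
  fix w
  have g: "(0, 0) \<in> grid N" "(0, 1) \<in> grid N" using N by (simp_all add: grid_iff)
  have "Tcoact N q (tletter (1, (0, 1))) l w = (\<Sum>j\<in>grid N. (if l = (0, 1) then hbasis (0, 0) j else if l = (1, 0) then hbasis (0, 1) j else 0) * tletter (1, j) w)"
    unfolding Tcoact_letter[OF l] letter_coact_def
  proof (rule sum.cong[OF refl])
    fix j assume j: "j \<in> grid N"
    show "comult N q (snd (1::nat, (0::nat, 1::nat))) l j * tletter (fst (1::nat, (0::nat, 1::nat)), j) w = (if l = (0, 1) then hbasis (0, 0) j else if l = (1, 0) then hbasis (0, 1) j else 0) * tletter (1, j) w"
      using comult_01[OF l j, of q] by (simp add: gen_x_def)
  qed
  also have "\<dots> = (if l = (0, 1) then tletter (1, (0, 0)) else if l = (1, 0) then tletter (1, (0, 1)) else (\<lambda>_. 0)) w"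
    using g by (simp add: sum_hb)
  finally show "Tcoact N q (tletter (1, (0, 1))) l w = (if l = (0, 1) then tletter (1, (0, 0)) else if l = (1, 0) then tletter (1, (0, 1)) else (\<lambda>_. 0)) w" .
qed

lemma shape_E:
  assumes fm: "comod_alg_map N q u a f" and N: "2 \<le> N" and z: "z \<in> grid N"
  shows "f (tletter (1, (0, 0))) z = f (tletter (1, (0, 0))) (0, 0) * W N u a 0 0 z"
proof -
  have T: "tletter (1, (0, 0)) \<in> Tcar N" using N by (intro Tcar_tletter) (simp_all add: grid_iff)
  have y: "(fst z, 0) \<in> grid N" using z N by (simp add: grid_iff)
  have e: "f (tletter (1, (0, 0))) z = f (Tcoact N q (tletter (1, (0, 0))) z) (fst z, 0)" by (rule f_extract[OF fm N T z])
  have c: "Tcoact N q (tletter (1, (0, 0))) z = (if z = (0, 0) then tletter (1, (0, 0)) else (\<lambda>_. 0))" by (rule Tco_E[OF N z])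
  have w: "W N u a 0 0 z = (if z = (0, 0) then 1 else 0)" using N by (simp add: W_00 hbasis_def)
  show ?thesis
  proof (cases "z = (0, 0)")
    case True then show ?thesis using w by simp
  next
    case False then show ?thesis using e c w f_zero[OF fm y] by simp
  qed
qed

lemma shape_G:
  assumes fm: "comod_alg_map N q u a f" and N: "2 \<le> N" and z: "z \<in> grid N"
  shows "f (tletter (1, (1, 0))) z = f (tletter (1, (1, 0))) (1, 0) * W N u a 1 0 z"
proof -
  have T: "tletter (1, (1, 0)) \<in> Tcar N" using N by (intro Tcar_tletter) (simp_all add: grid_iff)
  have y: "(fst z, 0) \<in> grid N" using z N by (simp add: grid_iff)
  have e: "f (tletter (1, (1, 0))) z = f (Tcoact N q (tletter (1, (1, 0))) z) (fst z, 0)" by (rule f_extract[OF fm N T z])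
  have c: "Tcoact N q (tletter (1, (1, 0))) z = (if z = (1, 0) then tletter (1, (1, 0)) else (\<lambda>_. 0))" by (rule Tco_G[OF N z])
  have w: "W N u a 1 0 z = (if z = (1, 0) then 1 else 0)" using N by (simp add: W_10[OF N] hbasis_def del: One_nat_def)
  show ?thesis
  proof (cases "z = (1, 0)")
    case True then show ?thesis using w by simp
  next
    case False then show ?thesis using e c w f_zero[OF fm y] by simp
  qed
qed

lemma shape_X:
  assumes fm: "comod_alg_map N q u a f" and N: "2 \<le> N" and z: "z \<in> grid N"
  shows "f (tletter (1, (0, 1))) z = f (tletter (1, (0, 0))) (0, 0) * W N u a 0 1 z + f (tletter (1, (0, 1))) (1, 0) * W N u a 1 0 z"
proof -
  have T: "tletter (1, (0, 1)) \<in> Tcar N" using N by (intro Tcar_tletter) (simp_all add: grid_iff)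
  have y: "(fst z, 0) \<in> grid N" using z N by (simp add: grid_iff)
  have e: "f (tletter (1, (0, 1))) z = f (Tcoact N q (tletter (1, (0, 1))) z) (fst z, 0)" by (rule f_extract[OF fm N T z])
  have c: "Tcoact N q (tletter (1, (0, 1))) z = (if z = (0, 1) then tletter (1, (0, 0)) else if z = (1, 0) then tletter (1, (0, 1)) else (\<lambda>_. 0))" by (rule Tco_X[OF N z])
  have w1: "W N u a 1 0 z = (if z = (1, 0) then 1 else 0)" using N by (simp add: W_10[OF N] hbasis_def del: One_nat_def)
  have w2: "W N u a 0 1 z = (if z = (0, 1) then 1 else 0)" using N by (simp add: W_01[OF N] hbasis_def del: One_nat_def)
  show ?thesis
  proof (cases "z = (1, 0)")
    case True then show ?thesis using w1 w2 by simp
  next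
    case False
    show ?thesis
    proof (cases "z = (0, 1)")
      case True then show ?thesis using e c w1 w2 by simp
    next
      case False2: False
      then show ?thesis using e c w1 w2 f_zero[OF fm y] False by simp
    qed
  qed
qed



theorem lemma3p1:
  fixes N :: nat and q u a :: "'r::comm_ring_1"
  assumes "2 \<le> N"
    and "poly (map_poly of_int (cyclotomic_poly N)) q = 0"
    and "u dvd 1"
  shows "poly_H_identity N q u a (Pa N q a)"
proof -
  have N: "2 \<le> N" using assms(1) .
  have N0: "N > 0" using N by simp
  have van: "\<forall>j. 0 < j \<and> j < N \<longrightarrow> gq q N j = 0" using gq_vanish[OF N0 assms(2)] by blast
  have m1: "Suc 0 mod N = Suc 0" using N by simp
  show ?thesis unfolding poly_H_identity_def
  proof (intro allI impI ballI)
    fix f z assume fm: "comod_alg_map N q u a f" and z: "z \<in> grid N"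
    have fadd: "\<And>p r y. p \<in> Tcar N \<Longrightarrow> r \<in> Tcar N \<Longrightarrow> y \<in> grid N \<Longrightarrow> f (\<lambda>w. p w + r w) y = f p y + f r y"
      using fm unfolding comod_alg_map_def by blast
    have fsm: "\<And>c p y. p \<in> Tcar N \<Longrightarrow> y \<in> grid N \<Longrightarrow> f (\<lambda>w. c * p w) y = c * f p y"
      using fm unfolding comod_alg_map_def by blast
    have fmul: "\<And>p r y. p \<in> Tcar N \<Longrightarrow> r \<in> Tcar N \<Longrightarrow> y \<in> grid N \<Longrightarrow> f (tmul p r) y = bmul N q u a (f p) (f r) y"
      using fm unfolding comod_alg_map_def by blast
    define E :: "letter list \<Rightarrow> 'r" where "E = tletter (1, (0, 0))"
    define G :: "letter list \<Rightarrow> 'r" where "G = tletter (1, (1, 0))"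
    define X :: "letter list \<Rightarrow> 'r" where "X = tletter (1, (0, 1))"
    have TE: "E \<in> Tcar N" unfolding E_def using N by (intro Tcar_tletter) (simp_all add: grid_iff)
    have TG: "G \<in> Tcar N" unfolding G_def using N by (intro Tcar_tletter) (simp_all add: grid_iff)
    have TX: "X \<in> Tcar N" unfolding X_def using N by (intro Tcar_tletter) (simp_all add: grid_iff)
    define e0 where "e0 = f E (0, 0)"
    define c where "c = f G (1, 0)"
    define d where "d = f X (1, 0)"
    have sE: "\<forall>y\<in>grid N. f E y = e0 * W N u a 0 0 y"
      using shape_E[OF fm N] unfolding E_def e0_def by blast
    have sG: "\<forall>y\<in>grid N. f G y = c * W N u a 1 0 y"
      using shape_G[OF fm N] unfolding G_def c_def by blast
    have sX: "\<forall>y\<in>grid N. f X y = e0 * W N u a 0 1 y + d * W N u a 1 0 y"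
      using shape_X[OF fm N] unfolding X_def d_def e0_def E_def by blast
    define C where "C = (\<lambda>w. tmul X G w - q * tmul G X w)"
    have C_eq: "C = (\<lambda>w. tmul X G w + (\<lambda>w. (- q) * tmul G X w) w)" by (simp add: C_def)
    have TXG: "tmul X G \<in> Tcar N" and TGX: "tmul G X \<in> Tcar N" using TX TG by (simp_all add: Tcar_tmul)
    have TGX': "(\<lambda>w. (- q) * tmul G X w) \<in> Tcar N" using TGX by (rule Tcar_smult)
    have TC: "C \<in> Tcar N" unfolding C_eq using TXG TGX' by (rule Tcar_add)
    define s where "s = d * c * (1 - q)"
    have fC: "\<forall>y\<in>grid N. f C y = s * W N u a 2 0 y"
    proof
      fix y assume y: "y \<in> grid N"
      have "f C y = f (tmul X G) y + (- q) * f (tmul G X) y"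
        unfolding C_eq using fadd[OF TXG TGX' y] fsm[OF TGX y, of "- q"] by simp
      also have "f (tmul X G) y = bmul N q u a (\<lambda>z. e0 * W N u a 0 1 z + d * W N u a 1 0 z) (\<lambda>z. c * W N u a 1 0 z) y"
        using fmul[OF TX TG y] sX sG by (simp add: bmul_cong[of N "f X" _ "f G"])
      also have "\<dots> = e0 * c * q * W N u a 1 1 y + d * c * W N u a 2 0 y"
        using N0 N by (simp add: bmul_add_left bmul_smult_left bmul_smult_right W_mul m1 numeral_2_eq_2)
      also have "f (tmul G X) y = bmul N q u a (\<lambda>z. c * W N u a 1 0 z) (\<lambda>z. e0 * W N u a 0 1 z + d * W N u a 1 0 z) y"
        using fmul[OF TG TX y] sX sG by (simp add: bmul_cong[of N "f G" _ "f X"])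
      also have "\<dots> = c * e0 * W N u a 1 1 y + c * d * W N u a 2 0 y"
        using N0 N by (simp add: bmul_add_right bmul_smult_left bmul_smult_right W_mul m1 numeral_2_eq_2)
      finally show "f C y = s * W N u a 2 0 y" by (simp add: s_def algebra_simps)
    qed
    have pC: "f (tpow C N) z = s ^ N * W N u a (2 * N) 0 z"
      using f_tpow[OF fm TC z] bpw_cong[of N "f C" "\<lambda>z. s * W N u a 2 0 z"] fC W_pow[OF N0] by simp
    have pG: "\<forall>y\<in>grid N. f (tpow G N) y = c ^ N * W N u a N 0 y"
      using f_tpow[OF fm TG] bpw_cong[of N "f G" "\<lambda>z. c * W N u a 1 0 z"] sG W_pow[OF N0, where s=c and m=1 and n=N] by simp
    have pE: "\<forall>y\<in>grid N. f (tpow E N) y = e0 ^ N * W N u a 0 0 y"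
      using f_tpow[OF fm TE] bpw_cong[of N "f E" "\<lambda>z. e0 * W N u a 0 0 z"] sE W_pow[OF N0, where s=e0 and m=0 and n=N] by simp
    define K where "K = d ^ N * u + e0 ^ N * a"
    have pX: "\<forall>y\<in>grid N. f (tpow X N) y = K * W N u a 0 0 y"
      using f_tpow[OF fm TX] bpw_xi[OF N sX] Tx_N[OF N van] by (simp add: K_def W_00[OF N0])
    have TpG: "tpow G N \<in> Tcar N" and TpX: "tpow X N \<in> Tcar N" and TpE: "tpow E N \<in> Tcar N"
      and TpC: "tpow C N \<in> Tcar N"
      using TG TX TE TC by (simp_all add: Tcar_tpow)
    have WN: "W N u a N 0 z = u * W N u a 0 0 z" using N0 by (simp add: W_def)
    have W2N: "W N u a (2 * N) 0 z = u ^ 2 * W N u a 0 0 z" using N0 by (simp add: W_def)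
    have B1: "f (tmul (tpow G N) (tpow X N)) z = c ^ N * K * u * W N u a 0 0 z"
    proof -
      have "f (tmul (tpow G N) (tpow X N)) z = bmul N q u a (\<lambda>y. c ^ N * W N u a N 0 y) (\<lambda>y. K * W N u a 0 0 y) z"
        using fmul[OF TpG TpX z] pG pX by (simp add: bmul_cong[of N "f (tpow G N)" _ "f (tpow X N)"])
      also have "\<dots> = c ^ N * K * W N u a N 0 z" using N0 by (simp add: bmul_smult_left bmul_smult_right W_mul)
      finally show ?thesis using WN by simp
    qed
    have B2: "f (tmul (tpow E N) (tpow G N)) z = e0 ^ N * c ^ N * u * W N u a 0 0 z"
    proof -
      have "f (tmul (tpow E N) (tpow G N)) z = bmul N q u a (\<lambda>y. e0 ^ N * W N u a 0 0 y) (\<lambda>y. c ^ N * W N u a N 0 y) z"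
        using fmul[OF TpE TpG z] pE pG by (simp add: bmul_cong[of N "f (tpow E N)" _ "f (tpow G N)"])
      also have "\<dots> = e0 ^ N * c ^ N * W N u a N 0 z" using N0 by (simp add: bmul_smult_left bmul_smult_right W_mul)
      finally show ?thesis using WN by simp
    qed
    have Pa_eq: "Pa N q a = (\<lambda>w. (\<lambda>w. tpow C N w + (\<lambda>w. (- ((1 - q) ^ N)) * tmul (tpow G N) (tpow X N) w) w) w
        + (\<lambda>w. ((1 - q) ^ N * a) * tmul (tpow E N) (tpow G N) w) w)"
      unfolding Pa_def C_def E_def G_def X_def Let_def by (rule ext) (simp add: algebra_simps)
    have T1: "tmul (tpow G N) (tpow X N) \<in> Tcar N" and T2: "tmul (tpow E N) (tpow G N) \<in> Tcar N"
      using TpG TpX TpE by (simp_all add: Tcar_tmul)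
    have T1': "(\<lambda>w. (- ((1 - q) ^ N)) * tmul (tpow G N) (tpow X N) w) \<in> Tcar N" using T1 by (rule Tcar_smult)
    have T2': "(\<lambda>w. ((1 - q) ^ N * a) * tmul (tpow E N) (tpow G N) w) \<in> Tcar N" using T2 by (rule Tcar_smult)
    have T3: "(\<lambda>w. tpow C N w + (\<lambda>w. (- ((1 - q) ^ N)) * tmul (tpow G N) (tpow X N) w) w) \<in> Tcar N"
      using TpC T1' by (rule Tcar_add)
    have "f (Pa N q a) z = f (tpow C N) z + (- ((1 - q) ^ N)) * f (tmul (tpow G N) (tpow X N)) z
        + ((1 - q) ^ N * a) * f (tmul (tpow E N) (tpow G N)) z"
      unfolding Pa_eq using fadd[OF T3 T2' z] fadd[OF TpC T1' z] fsm[OF T1 z, of "- ((1 - q) ^ N)"] fsm[OF T2 z, of "(1 - q) ^ N * a"] by simp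
    also have "\<dots> = 0"
    proof -
      have sN: "s ^ N = d ^ N * c ^ N * (1 - q) ^ N" by (simp add: s_def power_mult_distrib)
      show ?thesis unfolding pC B1 B2 W2N K_def sN by (simp add: algebra_simps power2_eq_square)
    qed
    finally show "f (Pa N q a) z = 0" .
  qed
qed

end
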